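(* Let $p\ge 7$ be a prime and $k\ge1$ an integer with $p-1\nmid 2k$, and put $t=2k-1$. Then, modulo $p$, \begin{align*} C_k(2,5,6)\,B_{2k} \equiv{}& (3^t + 6^t) S_t(\tfrac{1}{18}, \tfrac{11}{180}) + (3^t + 6^t - 10^t) S_t(\tfrac{11}{180}, \tfrac{1}{15}) - (6^t - 10^t + 12^t) S_t(\tfrac{2}{15}, \tfrac{5}{36})\\ &+ (6^t + 12^t) S_t(\tfrac{7}{36}, \tfrac{1}{5}) - 10^t S_t(\tfrac{47}{180}, \tfrac{4}{15}) - (2^t + 6^t + 12^t) S_t(\tfrac{3}{10}, \tfrac{11}{36}) + 10^t S_t(\tfrac{1}{3}, \tfrac{61}{180})\\ &+ (6^t + 12^t) S_t(\tfrac{13}{36}, \tfrac{11}{30}) - 10^t S_t(\tfrac{83}{180}, \tfrac{7}{15}). \end{align*}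
   Context: $B_n$ denotes the $n$th Bernoulli number, defined by $\frac{z}{e^z-1}=\sum_{n\ge0}B_n\frac{z^n}{n!}$. For a prime $p$, an integer $\ell$ and real numbers $0\le x<y\le 1$, $S_\ell(x,y)=\sum_{xp<s<yp} s^\ell$, the sum over integers $s$ strictly between $xp$ and $yp$. For positive integers $a,b,c$, $C_k(a,b,c)=\frac{a^{p-2k}+b^{p-2k}-c^{p-2k}-1}{4k}$ (a rational number). A congruence $u\equiv v \pmod p$ between rational numbers means that $u-v$ has $p$-adic valuation at least $1$. *)

theory Defs
  imports "HOL-Computational_Algebra.Computational_Algebra" "HOL-Number_Theory.Number_Theory"
begin

definition bernoulli :: "nat \<Rightarrow> rat" where
  "bernoulli n = fact n * fps_nth (fps_X / (fps_exp 1 - 1)) n"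

definition S_sum :: "nat \<Rightarrow> nat \<Rightarrow> rat \<Rightarrow> rat \<Rightarrow> rat" where
  "S_sum p l x y = (\<Sum>s\<in>{s::int. x * of_nat p < of_int s \<and> of_int s < y * of_nat p}. (of_int s) ^ l)"

definition C_coef :: "nat \<Rightarrow> nat \<Rightarrow> nat \<Rightarrow> nat \<Rightarrow> nat \<Rightarrow> rat" where
  "C_coef p k a b c = ((of_nat a) powi (int p - 2 * int k) + (of_nat b) powi (int p - 2 * int k)
      - (of_nat c) powi (int p - 2 * int k) - 1) / (4 * of_nat k)"

(* u \<equiv> v (mod p) for rationals: u - v has p-adic valuation at least 1 *)
definition rat_cong :: "rat \<Rightarrow> rat \<Rightarrow> nat \<Rightarrow> bool" where
  "rat_cong u v p = (let (a, b) = quotient_of (u - v) in int p dvd a \<and> \<not> int p dvd b)"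


end

theory Submission
  imports Defs
begin


definition pdv :: "nat \<Rightarrow> nat \<Rightarrow> rat \<Rightarrow> bool" where
  "pdv p e x \<longleftrightarrow> (\<exists>a b. \<not> int p dvd b \<and> x = of_int (int p ^ e * a) / of_int b)"

context fixes p :: nat assumes pp: "prime p"
begin

lemma pdv_0[simp]: "pdv p e 0"
  unfolding pdv_def
  by (rule exI[of _ 0], rule exI[of _ 1]) (use pp in \<open>auto simp: prime_gt_1_nat\<close>)

lemma pdv_intI: "int p ^ e dvd a \<Longrightarrow> pdv p e (of_int a)"
  unfolding pdv_def
  by (rule exI[of _ "a div int p ^ e"], rule exI[of _ 1]) (use pp in \<open>auto simp: prime_gt_1_nat\<close>)

lemma pdv_int[simp]: "pdv p 0 (of_int a)"
  by (rule pdv_intI) simp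

lemma pdv_nat[simp]: "pdv p 0 (of_nat a)"
  using pdv_int[of "int a"] by simp

lemma pdv_numeral[simp]: "pdv p 0 (numeral a)"
  using pdv_int[of "numeral a"] by simp

lemma pdv_1[simp]: "pdv p 0 1"
  using pdv_int[of 1] by simp

lemma prime_int_p: "prime (int p)" using pp by simp

lemma not_dvd_mult: "\<not> int p dvd b \<Longrightarrow> \<not> int p dvd d \<Longrightarrow> \<not> int p dvd (b * d)"
  using prime_int_p by (simp add: prime_dvd_mult_iff)

lemma pdv_add:
  assumes "pdv p e x" "pdv p e y" shows "pdv p e (x + y)"
proof -
  obtain a b where ab: "\<not> int p dvd b" "x = of_int (int p ^ e * a) / of_int b" using assms(1) pdv_def by auto
  obtain c d where cd: "\<not> int p dvd d" "y = of_int (int p ^ e * c) / of_int d" using assms(2) pdv_def by auto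
  have b0: "b \<noteq> 0" "d \<noteq> 0" using ab cd by auto
  have "x + y = of_int (int p ^ e * (a * d + c * b)) / of_int (b * d)"
    using ab cd b0 by (simp add: field_simps)
  then show ?thesis unfolding pdv_def using not_dvd_mult[OF ab(1) cd(1)] by blast
qed

lemma pdv_mult:
  assumes "pdv p e x" "pdv p f y" shows "pdv p (e + f) (x * y)"
proof -
  obtain a b where ab: "\<not> int p dvd b" "x = of_int (int p ^ e * a) / of_int b" using assms(1) pdv_def by auto
  obtain c d where cd: "\<not> int p dvd d" "y = of_int (int p ^ f * c) / of_int d" using assms(2) pdv_def by auto
  have "x * y = of_int (int p ^ (e + f) * (a * c)) / of_int (b * d)"
    using ab cd by (simp add: field_simps power_add)
  then show ?thesis unfolding pdv_def using not_dvd_mult[OF ab(1) cd(1)] by blast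
qed

lemma pdv_mult0: "pdv p e x \<Longrightarrow> pdv p 0 y \<Longrightarrow> pdv p e (x * y)"
  using pdv_mult[of e x 0 y] by simp

lemma pdv_mult0': "pdv p 0 x \<Longrightarrow> pdv p e y \<Longrightarrow> pdv p e (x * y)"
  using pdv_mult[of 0 x e y] by simp

lemma pdv_uminus: "pdv p e x \<Longrightarrow> pdv p e (- x)"
  using pdv_mult0[of e x "-1"] pdv_int[of "-1"] by simp

lemma pdv_diff: "pdv p e x \<Longrightarrow> pdv p e y \<Longrightarrow> pdv p e (x - y)"
  using pdv_add[of e x "- y"] pdv_uminus by simp

lemma pdv_mono: assumes "f \<le> e" "pdv p e x" shows "pdv p f x"
proof -
  obtain a b where ab: "\<not> int p dvd b" "x = of_int (int p ^ e * a) / of_int b" using assms(2) pdv_def by auto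
  have "int p ^ e * a = int p ^ f * (int p ^ (e - f) * a)" using assms(1)
    by (simp add: power_add[symmetric])
  then show ?thesis using ab unfolding pdv_def by metis
qed

lemma pdv_sum: "(\<And>i. i \<in> A \<Longrightarrow> pdv p e (f i)) \<Longrightarrow> pdv p e (sum f A)"
  by (induction A rule: infinite_finite_induct) (auto intro: pdv_add)

lemma pdv_div_int: assumes "pdv p e x" "\<not> int p dvd c" shows "pdv p e (x / of_int c)"
proof -
  obtain a b where ab: "\<not> int p dvd b" "x = of_int (int p ^ e * a) / of_int b" using assms(1) pdv_def by auto
  have "x / of_int c = of_int (int p ^ e * a) / of_int (b * c)" using ab by simp
  then show ?thesis unfolding pdv_def using not_dvd_mult[OF ab(1) assms(2)] by blast
qed

lemma pdv_cancel_int: assumes "pdv p e (of_int c * x)" "\<not> int p dvd c" shows "pdv p e x"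
proof -
  have "c \<noteq> 0" using assms(2) by auto
  then show ?thesis using pdv_div_int[OF assms] by simp
qed

lemma pdv_div_ppow: assumes "pdv p (e + v) x" shows "pdv p e (x / of_nat p ^ v)"
proof -
  obtain a b where ab: "\<not> int p dvd b" "x = of_int (int p ^ (e + v) * a) / of_int b" using assms(1) pdv_def by auto
  have p0: "(of_nat p :: rat) \<noteq> 0" using pp prime_gt_0_nat by auto
  have "x / of_nat p ^ v = of_int (int p ^ e * a) / of_int b" using ab p0 by (simp add: power_add field_simps)
  then show ?thesis unfolding pdv_def using ab(1) by blast
qed

lemma pdv_mult_ppow: assumes "pdv p e x" shows "pdv p (e + v) (of_nat p ^ v * x)"
  using pdv_mult[OF pdv_intI[of v "int p ^ v"] assms] by (simp add: add.commute)

lemma pdv_div_nat: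
  assumes "m > 0" "pdv p (e + multiplicity p m) x" shows "pdv p e (x / of_nat m)"
proof -
  obtain u where u: "m = p ^ multiplicity p m * u" "\<not> p dvd u"
    using multiplicity_decompose'[of m p] assms(1) pp
    by (metis not_prime_unit gr_implies_not0)
  have "x / of_nat m = (x / of_nat p ^ multiplicity p m) / of_int (int u)"
    by (subst u(1)) simp
  moreover have "\<not> int p dvd int u" using u(2) by simp
  ultimately show ?thesis using pdv_div_int pdv_div_ppow assms(2) by metis
qed

lemma pdv_rat_cong: assumes "pdv p 1 (u - v)" shows "rat_cong u v p"
proof -
  obtain a b where ab: "\<not> int p dvd b" "u - v = of_int (int p * a) / of_int b" using assms pdv_def by auto
  obtain n d where nd: "quotient_of (u - v) = (n, d)" by (cases "quotient_of (u - v)") auto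
  have d0: "d > 0" using nd quotient_of_denom_pos by blast
  have cop: "coprime n d" using nd quotient_of_coprime by blast
  have eq: "of_int n / of_int d = (of_int (int p * a) / of_int b :: rat)"
    using nd ab(2) quotient_of_div by metis
  have b0: "b \<noteq> 0" using ab(1) by auto
  have "of_int (n * b) = (of_int (int p * a * d) :: rat)"
    using eq d0 b0 by (simp add: field_simps)
  then have nb: "n * b = int p * a * d" by linarith
  have pn: "int p dvd n"
  proof -
    have "int p dvd n * b" using nb by simp
    then show ?thesis using ab(1) prime_int_p by (simp add: prime_dvd_mult_iff)
  qed
  have pd: "\<not> int p dvd d"
  proof
    assume "int p dvd d"
    with pn cop have "is_unit (int p)" by (meson coprime_common_divisor)
    then show False using prime_int_p by (simp add: not_prime_unit)
  qed
  show ?thesis unfolding rat_cong_def using nd pn pd by simp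
qed

end


lemma bern_fps: "fps_X / (fps_exp (1::rat) - 1) * (fps_exp 1 - 1) = fps_X"
proof (rule fps_times_divide_eq)
  have "(fps_exp (1::rat) - 1) $ 1 \<noteq> 0" by simp
  then show "fps_exp (1::rat) - 1 \<noteq> 0" by auto
  have "subdegree (fps_exp (1::rat) - 1) \<le> 1"
    by (rule subdegree_leI) simp
  then show "subdegree (fps_exp (1::rat) - 1) \<le> subdegree (fps_X :: rat fps)" by simp
qed

lemma exp_sum_tele: "(\<Sum>j<N. fps_exp (of_nat j :: rat)) * (fps_exp 1 - 1) = fps_exp (of_nat N) - 1"
proof (induction N)
  case 0 then show ?case by simp
next
  case (Suc N)
  have "(\<Sum>j<Suc N. fps_exp (of_nat j :: rat)) * (fps_exp 1 - 1)
      = (\<Sum>j<N. fps_exp (of_nat j :: rat)) * (fps_exp 1 - 1) + fps_exp (of_nat N) * (fps_exp 1 - 1)"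
    by (simp add: algebra_simps)
  also have "\<dots> = fps_exp (of_nat N) - 1 + (fps_exp (of_nat N + 1) - fps_exp (of_nat N))"
    by (simp only: Suc fps_exp_add_mult) (simp add: algebra_simps)
  finally show ?case by simp
qed

lemma faulhaber0:
  "of_nat (\<Sum>j<N. j ^ m) = (\<Sum>i=0..Suc m. ((of_nat N)^i / fact i - (if i = 0 then 1 else 0)) * (bernoulli (Suc m - i) / fact (Suc m - i)) :: rat) * fact m"
proof -
  define G where "G = fps_X / (fps_exp (1::rat) - 1)"
  define F where "F = (\<Sum>j<N. fps_exp (of_nat j :: rat))"
  have "F * fps_X = F * ((fps_exp 1 - 1) * G)" using bern_fps by (simp add: G_def mult.commute)
  also have "\<dots> = (fps_exp (of_nat N) - 1) * G" using exp_sum_tele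
    by (simp add: F_def mult.assoc[symmetric])
  finally have eq: "F * fps_X = (fps_exp (of_nat N) - 1) * G" .
  have l: "(F * fps_X) $ Suc m = (\<Sum>j<N. (of_nat j)^m / fact m)"
    by (simp add: F_def fps_sum_nth)
  have r: "((fps_exp (of_nat N) - 1) * G) $ Suc m =
     (\<Sum>i=0..Suc m. ((of_nat N)^i / fact i - (if i = 0 then 1 else 0)) * (bernoulli (Suc m - i) / fact (Suc m - i)))"
    unfolding fps_mult_nth by (intro sum.cong refl) (simp add: bernoulli_def G_def)
  have "(\<Sum>j<N. (of_nat j :: rat)^m / fact m) = (\<Sum>i=0..Suc m. ((of_nat N)^i / fact i - (if i = 0 then 1 else 0)) * (bernoulli (Suc m - i) / fact (Suc m - i)))"
    using l r unfolding eq by simp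
  then have "(\<Sum>j<N. (of_nat j :: rat)^m) / fact m = (\<Sum>i=0..Suc m. ((of_nat N)^i / fact i - (if i = 0 then 1 else 0)) * (bernoulli (Suc m - i) / fact (Suc m - i)))"
    by (simp add: sum_divide_distrib)
  then show ?thesis by (simp add: field_simps)
qed


lemma coef_eq: assumes "1 \<le> i" "i \<le> Suc m"
  shows "fact m / (fact i * fact (Suc m - i)) = (of_nat (m choose (i - 1)) / of_nat i :: rat)"
proof -
  have "(of_nat (m choose (i - 1)) :: rat) = fact m / (fact (i - 1) * fact (m - (i - 1)))"
    using assms by (subst binomial_fact) auto
  moreover have "fact i = (of_nat i :: rat) * fact (i - 1)" using assms
    by (simp add: fact_reduce)
  moreover have "m - (i - 1) = Suc m - i" using assms by simp
  ultimately show ?thesis using assms by (simp add: field_simps)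
qed

lemma faulhaber:
  "of_nat (\<Sum>j<N. j ^ m) = (\<Sum>i=1..Suc m. (of_nat N)^i * bernoulli (Suc m - i) * (of_nat (m choose (i - 1)) / of_nat i) :: rat)"
proof -
  have "of_nat (\<Sum>j<N. j ^ m) = (\<Sum>i=0..Suc m. ((of_nat N)^i / fact i - (if i = 0 then 1 else 0)) * (bernoulli (Suc m - i) / fact (Suc m - i)) :: rat) * fact m"
    by (rule faulhaber0)
  also have "\<dots> = (\<Sum>i=0..Suc m. ((of_nat N)^i / fact i - (if i = 0 then 1 else 0)) * (bernoulli (Suc m - i) / fact (Suc m - i)) * fact m)"
    by (simp only: sum_distrib_right)
  also have "\<dots> = (\<Sum>i=1..Suc m. ((of_nat N)^i / fact i - (if i = 0 then 1 else 0)) * (bernoulli (Suc m - i) / fact (Suc m - i)) * fact m)"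
    by (rule sum.mono_neutral_right) auto
  also have "\<dots> = (\<Sum>i=1..Suc m. (of_nat N)^i * bernoulli (Suc m - i) * (of_nat (m choose (i - 1)) / of_nat i))"
  proof (rule sum.cong[OF refl])
    fix i assume i: "i \<in> {1..Suc m}"
    then have "((of_nat N)^i / fact i - (if i = 0 then 1 else 0)) * (bernoulli (Suc m - i) / fact (Suc m - i)) * fact m
       = (of_nat N)^i * bernoulli (Suc m - i) * (fact m / (fact i * fact (Suc m - i)) :: rat)"
      by simp
    also have "\<dots> = (of_nat N)^i * bernoulli (Suc m - i) * (of_nat (m choose (i - 1)) / of_nat i)"
      using coef_eq[of i m] i by simp
    finally show "((of_nat N)^i / fact i - (if i = 0 then 1 else 0)) * (bernoulli (Suc m - i) / fact (Suc m - i)) * fact m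
       = (of_nat N)^i * bernoulli (Suc m - i) * (of_nat (m choose (i - 1)) / of_nat i)" .
  qed
  finally show ?thesis .
qed

lemma faulhaber_split:
  "of_nat (\<Sum>j<N. j ^ m) = of_nat N * bernoulli m + (\<Sum>i=2..Suc m. (of_nat N)^i * bernoulli (Suc m - i) * (of_nat (m choose (i - 1)) / of_nat i) :: rat)"
proof -
  have h1: "(\<Sum>i=1..Suc m. (of_nat N)^i * bernoulli (Suc m - i) * (of_nat (m choose (i - 1)) / of_nat i) :: rat)
     = (of_nat N)^1 * bernoulli (Suc m - 1) * (of_nat (m choose (1 - 1)) / of_nat 1) + (\<Sum>i=Suc 1..Suc m. (of_nat N)^i * bernoulli (Suc m - i) * (of_nat (m choose (i - 1)) / of_nat i))"
    by (rule sum.atLeast_Suc_atMost) simp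
  have h2: "(of_nat N)^1 * bernoulli (Suc m - 1) * (of_nat (m choose (1 - 1)) / of_nat 1) = of_nat N * (bernoulli m :: rat)"
    by simp
  have h3: "Suc 1 = 2" by simp
  show ?thesis unfolding faulhaber h1 h2 h3 by (rule refl)
qed

lemma three_pow: "2 \<le> i \<Longrightarrow> i < (3::nat) ^ (i - 1)"
proof (induction i rule: dec_induct)
  case base then show ?case by simp
next
  case (step n)
  then have "(3::nat) ^ (Suc n - 1) = 3 * 3 ^ (n - 1)" by (cases n) auto
  then show ?case using step by simp
qed

lemma mult_le:
  assumes "prime p" "p \<ge> 3" "i \<ge> 2" shows "multiplicity p i \<le> i - 2"
proof -
  have "p ^ multiplicity p i dvd i" by (rule multiplicity_dvd)
  then have "p ^ multiplicity p i \<le> i" using assms(3) by (intro dvd_imp_le) auto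
  moreover have "3 ^ multiplicity p i \<le> p ^ multiplicity p i" using assms(2) by (simp add: power_mono)
  ultimately have "3 ^ multiplicity p i < (3::nat) ^ (i - 1)" using three_pow[OF assms(3)] by linarith
  then have "multiplicity p i < i - 1" using power_less_imp_less_exp by fastforce
  then show ?thesis by linarith
qed

lemma pdv_pow_div:
  assumes "prime p" "i > 0" "multiplicity p i \<le> a"
  shows "pdv p (a - multiplicity p i) (of_nat p ^ a / of_nat i)"
proof -
  have "pdv p (a - multiplicity p i + multiplicity p i) (of_nat p ^ a)"
    using pdv_intI[OF assms(1), of a "int p ^ a"] assms(3) by simp
  then show ?thesis by (rule pdv_div_nat[OF assms(1,2)])
qed

lemma vstaudt:
  assumes "prime p" "p \<ge> 3" shows "pdv p 0 (of_nat p * bernoulli n)"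
proof (induction n rule: less_induct)
  case (less n)
  have eq: "of_nat p * bernoulli n = of_nat (\<Sum>j<p. j ^ n) - (\<Sum>i=2..Suc n. (of_nat p)^i * bernoulli (Suc n - i) * (of_nat (n choose (i - 1)) / of_nat i) :: rat)"
  proof -
    define R where "R = (\<Sum>i=2..Suc n. (of_nat p)^i * bernoulli (Suc n - i) * (of_nat (n choose (i - 1)) / of_nat i) :: rat)"
    have "of_nat (\<Sum>j<p. j ^ n) = of_nat p * bernoulli n + R"
      unfolding R_def by (rule faulhaber_split)
    then show ?thesis unfolding R_def[symmetric] by simp
  qed
  have "pdv p 0 ((of_nat p)^i * bernoulli (Suc n - i) * (of_nat (n choose (i - 1)) / of_nat i))"
    if i: "i \<in> {2..Suc n}" for i
  proof -
    have "(of_nat p)^i * bernoulli (Suc n - i) * (of_nat (n choose (i - 1)) / of_nat i)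
      = (of_nat p * bernoulli (Suc n - i)) * ((of_nat p ^ (i - 1) / of_nat i) * of_nat (n choose (i - 1)))"
      using i by (cases i) auto
    moreover have hX: "pdv p 0 (of_nat p * bernoulli (Suc n - i))" using less i by auto
    moreover have hY: "pdv p (i - 1 - multiplicity p i) (of_nat p ^ (i - 1) / of_nat i)"
      using pdv_pow_div[OF assms(1), of i "i - 1"] mult_le[OF assms, of i] i by auto
    have hY0: "pdv p 0 (of_nat p ^ (i - 1) / of_nat i)" by (rule pdv_mono[OF assms(1) le0 hY])
    have "pdv p 0 ((of_nat p ^ (i - 1) / of_nat i) * of_nat (n choose (i - 1)))"
      by (rule pdv_mult0[OF assms(1) hY0 pdv_nat[OF assms(1)]])
    then have "pdv p 0 ((of_nat p * bernoulli (Suc n - i)) * ((of_nat p ^ (i - 1) / of_nat i) * of_nat (n choose (i - 1))))"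
      by (rule pdv_mult0[OF assms(1) hX])
    ultimately show ?thesis by (simp only:)
  qed
  then show ?case unfolding eq using assms(1)
    by (intro pdv_diff pdv_sum pdv_nat[OF assms(1)]) auto
qed

lemma bern_approx:
  assumes "prime p" "p \<ge> 3" "E \<ge> 1"
  shows "pdv p (E - 1) (of_nat (\<Sum>j<p^E. j ^ m) / of_nat (p ^ E) - bernoulli m)"
proof -
  define N where "N = p ^ E"
  have N0: "(of_nat N :: rat) \<noteq> 0" using assms(1) prime_gt_0_nat N_def by auto
  have eq: "of_nat (\<Sum>j<N. j ^ m) / of_nat N - bernoulli m = (\<Sum>i=2..Suc m. (of_nat N)^(i - 1) * bernoulli (Suc m - i) * (of_nat (m choose (i - 1)) / of_nat i) :: rat)"
  proof -
    have "of_nat (\<Sum>j<N. j ^ m) / of_nat N - bernoulli m = (\<Sum>i=2..Suc m. (of_nat N)^i * bernoulli (Suc m - i) * (of_nat (m choose (i - 1)) / of_nat i) :: rat) / of_nat N"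
    proof -
      define R where "R = (\<Sum>i=2..Suc m. (of_nat N)^i * bernoulli (Suc m - i) * (of_nat (m choose (i - 1)) / of_nat i) :: rat)"
      have "of_nat (\<Sum>j<N. j ^ m) = of_nat N * bernoulli m + R"
        unfolding R_def by (rule faulhaber_split)
      then show ?thesis unfolding R_def[symmetric] using N0 by (simp add: add_divide_distrib)
    qed
    also have "\<dots> = (\<Sum>i=2..Suc m. (of_nat N)^i * bernoulli (Suc m - i) * (of_nat (m choose (i - 1)) / of_nat i) / of_nat N)"
      by (rule sum_divide_distrib)
    also have "\<dots> = (\<Sum>i=2..Suc m. (of_nat N)^(i - 1) * bernoulli (Suc m - i) * (of_nat (m choose (i - 1)) / of_nat i))"
    proof (rule sum.cong[OF refl])
      fix i assume "i \<in> {2..Suc m}"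
      then have "(of_nat N :: rat)^i = of_nat N ^ (i - 1) * of_nat N" by (cases i) auto
      then show "(of_nat N)^i * bernoulli (Suc m - i) * (of_nat (m choose (i - 1)) / of_nat i) / of_nat N
          = (of_nat N)^(i - 1) * bernoulli (Suc m - i) * (of_nat (m choose (i - 1)) / (of_nat i :: rat))"
        using N0 by simp
    qed
    finally show ?thesis .
  qed
  have "pdv p (E - 1) ((of_nat N)^(i - 1) * bernoulli (Suc m - i) * (of_nat (m choose (i - 1)) / of_nat i))"
    if i: "i \<in> {2..Suc m}" for i
  proof -
    have "i - 1 \<ge> 1" using i by auto
    then have e1: "E * (i - 1) \<ge> 1" using assms(3) mult_le_mono[of 1 E 1 "i - 1"] by simp
    have s: "Suc (E * (i - 1) - 1) = E * (i - 1)" by (rule Suc_diff_1) (use e1 in linarith)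
    have "(of_nat N :: rat)^(i - 1) = of_nat p ^ (E * (i - 1))" by (simp add: N_def power_mult)
    also have "\<dots> = (of_nat p ^ Suc (E * (i - 1) - 1) :: rat)" unfolding s ..
    also have "\<dots> = of_nat p ^ (E * (i - 1) - 1) * of_nat p" by (rule power_Suc2)
    finally have "(of_nat N :: rat)^(i - 1) = of_nat p ^ (E * (i - 1) - 1) * of_nat p" .
    then have "(of_nat N)^(i - 1) * bernoulli (Suc m - i) * (of_nat (m choose (i - 1)) / of_nat i)
      = (of_nat p * bernoulli (Suc m - i)) * ((of_nat p ^ (E * (i - 1) - 1) / of_nat i) * of_nat (m choose (i - 1)))"
      by simp
    moreover have hX: "pdv p 0 (of_nat p * bernoulli (Suc m - i))" using vstaudt assms(1,2) by blast
    moreover have ml: "multiplicity p i \<le> i - 2" using mult_le[OF assms(1,2)] i by auto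
    have i2': "2 \<le> i" using i by auto
    have a2': "E * (i - 1) = (E - 1) * (i - 1) + (i - 1)" using assms(3) by (cases E) auto
    have mlE: "multiplicity p i \<le> E * (i - 1) - 1" using ml i2' a2' by linarith
    moreover have le: "E - 1 \<le> E * (i - 1) - 1 - multiplicity p i"
    proof -
      have i1: "1 \<le> i - 1" using i by auto
      have a1: "(E - 1) * 1 \<le> (E - 1) * (i - 1)" by (rule mult_le_mono2[OF i1])
      have a2: "E * (i - 1) = (E - 1) * (i - 1) + (i - 1)" using assms(3)
        by (cases E) auto
      have a1': "E - 1 \<le> (E - 1) * (i - 1)" using a1 by simp
      have i2: "2 \<le> i" using i by auto
      show ?thesis using ml a1' a2 i2 by linarith
    qed
    moreover have hY: "pdv p (E * (i - 1) - 1 - multiplicity p i) (of_nat p ^ (E * (i - 1) - 1) / of_nat i)"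
      using pdv_pow_div[OF assms(1), of i "E * (i - 1) - 1"] mlE i2' by auto
    have hY0: "pdv p (E - 1) (of_nat p ^ (E * (i - 1) - 1) / of_nat i)" by (rule pdv_mono[OF assms(1) le hY])
    have "pdv p (E - 1) ((of_nat p ^ (E * (i - 1) - 1) / of_nat i) * of_nat (m choose (i - 1)))"
      by (rule pdv_mult0[OF assms(1) hY0 pdv_nat[OF assms(1)]])
    then have "pdv p (E - 1) ((of_nat p * bernoulli (Suc m - i)) * ((of_nat p ^ (E * (i - 1) - 1) / of_nat i) * of_nat (m choose (i - 1))))"
      by (rule pdv_mult0'[OF assms(1) hX])
    ultimately show ?thesis by (simp only:)
  qed
  then show ?thesis unfolding N_def[symmetric] eq using assms(1)
    by (intro pdv_sum) auto
qed


lemma sum_mod_perm: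
  fixes M a :: nat assumes "coprime a M"
  shows "(\<Sum>j<M. f ((j * a) mod M)) = (\<Sum>j<M. f j)"
proof (cases "M = 0")
  case True then show ?thesis by simp
next
  case False
  have inj: "inj_on (\<lambda>j. j * a mod M) {..<M}"
  proof (rule inj_onI)
    fix x y assume xy: "x \<in> {..<M}" "y \<in> {..<M}" "x * a mod M = y * a mod M"
    then have "[x * a = y * a] (mod M)" by (simp add: cong_def)
    then have "[x = y] (mod M)" using cong_mult_rcancel_nat[of a M x y] assms by (simp add: coprime_commute)
    then show "x = y" using xy by (simp add: cong_def)
  qed
  have "(\<lambda>j. j * a mod M) ` {..<M} = {..<M}"
    by (rule endo_inj_surj) (use False inj in auto)
  then have "bij_betw (\<lambda>j. j * a mod M) {..<M} {..<M}" using inj by (simp add: bij_betw_def)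
  then show ?thesis by (rule sum.reindex_bij_betw)
qed

lemma cong_add_mult_self: fixes a b n :: nat shows "[a + n * b = a] (mod n)"
  by (simp add: cong_def)

lemma binom_cong:
  fixes x y N :: nat
  shows "[(x + y * N) ^ m = x ^ m + m * x ^ (m - 1) * y * N] (mod N^2)"
proof (induction m)
  case 0 then show ?case by simp
next
  case (Suc m)
  have "(x + y * N) ^ Suc m = (x + y * N) * (x + y * N) ^ m" by simp
  also have "[(x + y * N) * (x + y * N) ^ m = (x + y * N) * (x ^ m + m * x ^ (m - 1) * y * N)] (mod N^2)"
    using Suc by (intro cong_mult cong_refl)
  also have "(x + y * N) * (x ^ m + m * x ^ (m - 1) * y * N) = x ^ Suc m + Suc m * x ^ (Suc m - 1) * y * N + N^2 * (m * x ^ (m - 1) * y * y)"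
  proof (cases m)
    case 0 then show ?thesis by simp
  next
    case (Suc m')
    then show ?thesis by (simp add: power2_eq_square algebra_simps)
  qed
  also have "[x ^ Suc m + Suc m * x ^ (Suc m - 1) * y * N + N^2 * (m * x ^ (m - 1) * y * y) = x ^ Suc m + Suc m * x ^ (Suc m - 1) * y * N] (mod N^2)"
    by (rule cong_add_mult_self)
  finally show ?case .
qed

lemma cong_times_mod: fixes u v N :: nat
  shows "[u = v] (mod N) \<Longrightarrow> [u * N = v * N] (mod N^2)"
  by (simp add: cong_def power2_eq_square mod_mult_mult2)

lemma voronoi_nat:
  fixes a M m :: nat
  assumes "coprime a M" "M > 0"
  shows "[a ^ m * (\<Sum>j<M. j ^ m) = (\<Sum>j<M. j ^ m) + m * M * a ^ (m - 1) * (\<Sum>j<M. j ^ (m - 1) * (j * a div M))] (mod M^2)"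
proof -
  have each: "[(j * a) ^ m = (j * a mod M) ^ m + m * (j * a) ^ (m - 1) * (j * a div M) * M] (mod M^2)" for j
  proof -
    have "j * a = j * a mod M + (j * a div M) * M" by simp
    then have "[(j * a) ^ m = (j * a mod M) ^ m + m * (j * a mod M) ^ (m - 1) * (j * a div M) * M] (mod M^2)"
      using binom_cong[of "j * a mod M" "j * a div M" M m] by metis
    moreover have "[m * (j * a mod M) ^ (m - 1) * (j * a div M) * M = m * (j * a) ^ (m - 1) * (j * a div M) * M] (mod M^2)"
    proof -
      have "[(j * a mod M) ^ (m - 1) = (j * a) ^ (m - 1)] (mod M)"
        by (intro cong_pow) (simp add: cong_def)
      then have "[m * (j * a mod M) ^ (m - 1) * (j * a div M) = m * (j * a) ^ (m - 1) * (j * a div M)] (mod M)"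
        by (intro cong_mult cong_refl)
      then show ?thesis using cong_times_mod by blast
    qed
    ultimately show ?thesis by (metis cong_add_lcancel_nat cong_trans)
  qed
  have "a ^ m * (\<Sum>j<M. j ^ m) = (\<Sum>j<M. (j * a) ^ m)"
    by (simp add: sum_distrib_left power_mult_distrib mult.commute)
  also have "[\<dots> = (\<Sum>j<M. (j * a mod M) ^ m + m * (j * a) ^ (m - 1) * (j * a div M) * M)] (mod M^2)"
    by (intro cong_sum each)
  also have "(\<Sum>j<M. (j * a mod M) ^ m + m * (j * a) ^ (m - 1) * (j * a div M) * M)
     = (\<Sum>j<M. (j * a mod M) ^ m) + m * M * a ^ (m - 1) * (\<Sum>j<M. j ^ (m - 1) * (j * a div M))"
    by (simp add: sum.distrib sum_distrib_left power_mult_distrib algebra_simps)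
  also have "(\<Sum>j<M. (j * a mod M) ^ m) = (\<Sum>j<M. j ^ m)"
    using sum_mod_perm[OF assms(1), of "\<lambda>x. x ^ m"] by simp
  finally show ?thesis .
qed

lemma exists_nonroot:
  assumes "prime p" "\<not> (p - 1) dvd n"
  shows "\<exists>g. coprime g p \<and> \<not> [g ^ n = 1] (mod p)"
proof -
  obtain g where g: "residue_primroot p g" using prime_primitive_root_exists[of p] assms(1) prime_gt_1_nat by blast
  then have "coprime p g" "ord p g = p - 1"
    using assms(1) by (auto simp: residue_primroot_def totient_prime)
  moreover have "\<not> [g ^ n = 1] (mod p)"
    using calculation(2) assms(2) ord_divides[of g n p] by simp
  ultimately show ?thesis by (metis coprime_commute)
qed

lemma sum_pow_zero:
  assumes "prime p" "\<not> (p - 1) dvd n"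
  shows "[(\<Sum>r<p. r ^ n) = 0] (mod p)"
proof -
  obtain g where g: "coprime g p" "\<not> [g ^ n = 1] (mod p)" using exists_nonroot[OF assms] by blast
  have "g ^ n * (\<Sum>r<p. r ^ n) = (\<Sum>r<p. (r * g) ^ n)"
    by (simp add: sum_distrib_left power_mult_distrib mult.commute)
  also have "[\<dots> = (\<Sum>r<p. (r * g mod p) ^ n)] (mod p)"
    by (intro cong_sum cong_pow) (simp add: cong_def)
  also have "(\<Sum>r<p. (r * g mod p) ^ n) = (\<Sum>r<p. r ^ n)"
    using sum_mod_perm[OF g(1), of "\<lambda>x. x ^ n"] by simp
  finally have c: "[g ^ n * (\<Sum>r<p. r ^ n) = 1 * (\<Sum>r<p. r ^ n)] (mod p)" by simp
  have "coprime (\<Sum>r<p. r ^ n) p \<Longrightarrow> False"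
    using cong_mult_rcancel_nat[of "(\<Sum>r<p. r ^ n)" p "g ^ n" 1] c g(2) by simp
  then have "p dvd (\<Sum>r<p. r ^ n)" using assms(1) by (metis coprime_commute prime_imp_coprime_nat)
  then show ?thesis by (simp add: cong_0_iff)
qed

definition Fs :: "nat \<Rightarrow> nat \<Rightarrow> nat" where "Fs n A = (\<Sum>j<A. j ^ n)"

lemma Fs_period:
  assumes "prime p" "\<not> (p - 1) dvd n"
  shows "[Fs n (A + p) = Fs n A] (mod p)"
proof (induction A)
  case 0 then show ?case using sum_pow_zero[OF assms] by (simp add: Fs_def)
next
  case (Suc A)
  have "Fs n (Suc A + p) = Fs n (A + p) + (A + p) ^ n" by (simp add: Fs_def)
  also have "[\<dots> = Fs n A + A ^ n] (mod p)"
    by (intro cong_add Suc cong_pow) (simp add: cong_def)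
  also have "Fs n A + A ^ n = Fs n (Suc A)" by (simp add: Fs_def)
  finally show ?case .
qed

lemma Fs_period_mult:
  assumes "prime p" "\<not> (p - 1) dvd n"
  shows "[Fs n (A + p * i) = Fs n A] (mod p)"
proof (induction i)
  case 0 then show ?case by simp
next
  case (Suc i)
  have "[Fs n (A + p * i + p) = Fs n (A + p * i)] (mod p)" by (rule Fs_period[OF assms])
  moreover have "A + p * Suc i = A + p * i + p" by simp
  ultimately show ?case using Suc by (metis cong_trans)
qed

lemma Fs_cong:
  assumes "prime p" "\<not> (p - 1) dvd n" "[A = B] (mod p)"
  shows "[Fs n A = Fs n B] (mod p)"
proof -
  have "[Fs n A = Fs n (A mod p)] (mod p)"
    using Fs_period_mult[OF assms(1,2), of "A mod p" "A div p"] by (simp add: cong_sym mult.commute)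
  moreover have "[Fs n B = Fs n (B mod p)] (mod p)"
    using Fs_period_mult[OF assms(1,2), of "B mod p" "B div p"] by (simp add: cong_sym mult.commute)
  ultimately show ?thesis using assms(3) unfolding cong_def by simp
qed


lemma natcong_dvd: fixes x y n :: nat shows "[x = y] (mod n) \<Longrightarrow> int n dvd int x - int y"
  by (simp add: cong_iff_dvd_diff[symmetric] cong_int_iff)

definition TT :: "nat \<Rightarrow> nat \<Rightarrow> nat \<Rightarrow> nat" where
  "TT M a n = (\<Sum>j<M. j ^ n * (j * a div M))"

lemma mult_lt: assumes "prime p" "m > 0" shows "multiplicity p m < m"
proof -
  have "p ^ multiplicity p m dvd m" by (rule multiplicity_dvd)
  then have "p ^ multiplicity p m \<le> m" using assms(2) by (intro dvd_imp_le) auto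
  moreover have "2 ^ multiplicity p m \<le> p ^ multiplicity p m" using prime_ge_2_nat[OF assms(1)] by (simp add: power_mono)
  moreover have "multiplicity p m < 2 ^ multiplicity p m" by (rule less_exp)
  ultimately show ?thesis by linarith
qed

lemma voronoi_rat:
  assumes pp: "prime p" and p3: "p \<ge> 3" and cop: "coprime a p" and m1: "m \<ge> 1" and E: "E \<ge> m + 2"
  shows "pdv p 1 ((of_nat a ^ m - 1) * bernoulli m / of_nat m - of_nat a ^ (m - 1) * of_nat (TT (p ^ E) a (m - 1)))"
proof -
  define N where "N = p ^ E"
  define S where "S = (\<Sum>j<N. j ^ m)"
  define T where "T = TT N a (m - 1)"
  have N0: "N > 0" using pp prime_gt_0_nat N_def by auto
  have copN: "coprime a N" using cop unfolding N_def by simp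
  have c: "[a ^ m * S = S + m * N * a ^ (m - 1) * T] (mod N^2)"
    unfolding S_def T_def TT_def by (rule voronoi_nat[OF copN N0])
  then obtain z where z: "int (a ^ m * S) - int (S + m * N * a ^ (m - 1) * T) = int (N^2) * z"
    using natcong_dvd by (metis dvdE)
  have zq: "(of_nat a ^ m - 1) * of_nat S = of_nat m * of_nat N * of_nat a ^ (m - 1) * of_nat T + of_nat N ^ 2 * (of_int z :: rat)"
  proof -
    have "(of_int (int (a ^ m * S) - int (S + m * N * a ^ (m - 1) * T)) :: rat) = of_int (int (N^2) * z)"
      using z by simp
    then show ?thesis by (simp add: algebra_simps)
  qed
  have Nq: "(of_nat N :: rat) \<noteq> 0" using N0 by simp
  have mq: "(of_nat m :: rat) \<noteq> 0" using m1 by simp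
  have key: "(of_nat a ^ m - 1) * bernoulli m / of_nat m - of_nat a ^ (m - 1) * of_nat T
     = ((of_nat a ^ m - 1) * (- (of_nat S / of_nat N - bernoulli m)) + of_nat N * of_int z) / of_nat m"
  proof -
    have "(of_nat a ^ m - 1) * (of_nat S / of_nat N) = ((of_nat a ^ m - 1) * of_nat S) / (of_nat N :: rat)" by simp
    also have "\<dots> = of_nat m * of_nat a ^ (m - 1) * of_nat T + of_nat N * of_int z"
      unfolding zq using Nq by (simp add: field_simps power2_eq_square)
    finally have h: "(of_nat a ^ m - 1) * (of_nat S / of_nat N) = of_nat m * of_nat a ^ (m - 1) * of_nat T + of_nat N * (of_int z :: rat)" .
    have "((of_nat a ^ m - 1) * (- (of_nat S / of_nat N - bernoulli m)) + of_nat N * of_int z)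
       = (of_nat a ^ m - 1) * bernoulli m - (of_nat a ^ m - 1) * (of_nat S / of_nat N) + of_nat N * (of_int z :: rat)"
      by (simp add: algebra_simps)
    also have "\<dots> = (of_nat a ^ m - 1) * bernoulli m - of_nat m * of_nat a ^ (m - 1) * of_nat T"
      unfolding h by simp
    finally show ?thesis using mq by (simp add: field_simps)
  qed
  have v: "multiplicity p m < m" using mult_lt[OF pp] m1 by simp
  have "pdv p (1 + multiplicity p m) ((of_nat a ^ m - 1) * (- (of_nat S / of_nat N - bernoulli m)) + of_nat N * of_int z)"
  proof (rule pdv_add[OF pp])
    have "pdv p (E - 1) (of_nat S / of_nat N - bernoulli m)"
      unfolding S_def N_def using bern_approx[OF pp p3, of E m] E by simp
    moreover have h0: "pdv p 0 ((of_nat a :: rat) ^ m - 1)" using pdv_int[OF pp, of "int a ^ m - 1"] by simp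
    ultimately have "pdv p (E - 1) ((of_nat a ^ m - 1) * (- (of_nat S / of_nat N - bernoulli m)))"
      using pdv_mult0'[OF pp] pdv_uminus[OF pp] by blast
    moreover have le1: "1 + multiplicity p m \<le> E - 1" using E v by linarith
    ultimately show "pdv p (1 + multiplicity p m) ((of_nat a ^ m - 1) * (- (of_nat S / of_nat N - bernoulli m)))"
      using pdv_mono[OF pp le1] by blast
    have "pdv p E (of_nat N * of_int z)"
      using pdv_intI[OF pp, of E "int N * z"] unfolding N_def by simp
    moreover have le2: "1 + multiplicity p m \<le> E" using E v by linarith
    ultimately show "pdv p (1 + multiplicity p m) (of_nat N * of_int z)"
      using pdv_mono[OF pp le2] by blast
  qed
  then have "pdv p 1 (((of_nat a ^ m - 1) * (- (of_nat S / of_nat N - bernoulli m)) + of_nat N * of_int z) / of_nat m)"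
    using pdv_div_nat[OF pp] m1 by simp
  then show ?thesis using key unfolding T_def N_def by simp
qed


lemma bern_div_int:
  assumes pp: "prime p" and p3: "p \<ge> 3" and m1: "m \<ge> 1" and nd: "\<not> (p - 1) dvd m"
  shows "pdv p 0 (bernoulli m / of_nat m)"
proof -
  obtain g where g: "coprime g p" "\<not> [g ^ m = 1] (mod p)" using exists_nonroot[OF pp nd] by blast
  have h: "pdv p 1 ((of_nat g ^ m - 1) * bernoulli m / of_nat m - of_nat g ^ (m - 1) * of_nat (TT (p ^ (m + 2)) g (m - 1)))"
    by (rule voronoi_rat[OF pp p3 g(1) m1]) simp
  have y: "pdv p 0 ((of_nat g ^ (m - 1) * of_nat (TT (p ^ (m + 2)) g (m - 1)) :: rat))"
    using pdv_nat[OF pp, of "g ^ (m - 1) * TT (p ^ (m + 2)) g (m - 1)"] by simp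
  have "pdv p 0 (((of_nat g ^ m - 1) * bernoulli m / of_nat m - of_nat g ^ (m - 1) * of_nat (TT (p ^ (m + 2)) g (m - 1)))
      + of_nat g ^ (m - 1) * of_nat (TT (p ^ (m + 2)) g (m - 1)))"
    by (rule pdv_add[OF pp pdv_mono[OF pp le0 h] y])
  then have "pdv p 0 (of_int (int g ^ m - 1) * (bernoulli m / of_nat m))" by simp
  moreover have "\<not> int p dvd (int g ^ m - 1)"
  proof
    assume "int p dvd (int g ^ m - 1)"
    then have "[int (g ^ m) = int 1] (mod int p)" by (simp add: cong_iff_dvd_diff)
    then show False using g(2) cong_int_iff by blast
  qed
  ultimately show ?thesis by (rule pdv_cancel_int[OF pp])
qed

definition cc :: "nat \<Rightarrow> nat \<Rightarrow> nat \<Rightarrow> nat" where "cc M a l = (l * M + a - 1) div a"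

lemma div_count:
  fixes d a :: nat assumes "d < a"
  shows "(\<Sum>l\<in>{1..<a}. if l \<le> d then 1 else 0) = d"
proof -
  have "(\<Sum>l\<in>{1..<a}. if l \<le> d then 1 else (0::nat)) = card ({1..<a} \<inter> {l. l \<le> d})"
    by (simp add: sum.If_cases)
  also have "{1..<a} \<inter> {l. l \<le> d} = {1..d}" using assms by auto
  finally show ?thesis by simp
qed

lemma cc_le_iff:
  assumes "a > 0" shows "cc M a l \<le> j \<longleftrightarrow> l * M \<le> j * a"
proof -
  have "cc M a l \<le> j \<longleftrightarrow> cc M a l < Suc j" by (rule less_Suc_eq_le[symmetric])
  also have "\<dots> \<longleftrightarrow> l * M + a - 1 < Suc j * a" unfolding cc_def using assms by (rule div_less_iff_less_mult)
  also have "\<dots> \<longleftrightarrow> l * M \<le> j * a" using assms by auto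
  finally show ?thesis .
qed

lemma TT_split:
  assumes a0: "a > 0" and M0: "M > 0"
  shows "int (TT M a n) = (\<Sum>l\<in>{1..<a}. int (Fs n M) - int (Fs n (cc M a l)))"
proof -
  have d: "j * a div M = (\<Sum>l\<in>{1..<a}. if l * M \<le> j * a then 1 else 0)" if j: "j < M" for j
  proof -
    have lt: "j * a div M < a" using j a0 M0 by (simp add: div_less_iff_less_mult)
    have "(\<Sum>l\<in>{1..<a}. if l * M \<le> j * a then 1 else (0::nat)) = (\<Sum>l\<in>{1..<a}. if l \<le> j * a div M then 1 else 0)"
      using M0 by (intro sum.cong refl) (simp add: less_eq_div_iff_mult_less_eq)
    then show ?thesis using div_count[OF lt] by simp
  qed
  have "TT M a n = (\<Sum>j<M. \<Sum>l\<in>{1..<a}. if l * M \<le> j * a then j ^ n else 0)"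
    unfolding TT_def
  proof (intro sum.cong refl)
    fix j assume "j \<in> {..<M}"
    then have "j ^ n * (j * a div M) = (\<Sum>l\<in>{1..<a}. j ^ n * (if l * M \<le> j * a then 1 else 0))"
      using d by (simp add: sum_distrib_left)
    also have "\<dots> = (\<Sum>l\<in>{1..<a}. if l * M \<le> j * a then j ^ n else 0)"
      by (intro sum.cong refl) simp
    finally show "j ^ n * (j * a div M) = (\<Sum>l\<in>{1..<a}. if l * M \<le> j * a then j ^ n else 0)" .
  qed
  also have "\<dots> = (\<Sum>l\<in>{1..<a}. \<Sum>j<M. if l * M \<le> j * a then j ^ n else 0)"
    by (rule sum.swap)
  finally have t: "TT M a n = (\<Sum>l\<in>{1..<a}. \<Sum>j<M. if l * M \<le> j * a then j ^ n else 0)" .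
  have inner: "int (\<Sum>j<M. if l * M \<le> j * a then j ^ n else 0) = int (Fs n M) - int (Fs n (cc M a l))"
    if l: "l \<in> {1..<a}" for l
  proof -
    have ccM: "cc M a l \<le> M" using cc_le_iff[OF a0, of M l M] l by simp
    have "(\<Sum>j<M. if l * M \<le> j * a then j ^ n else 0) = (\<Sum>j<M. if cc M a l \<le> j then j ^ n else 0)"
      using cc_le_iff[OF a0] by simp
    also have "\<dots> = (\<Sum>j\<in>{cc M a l..<M}. j ^ n)"
      by (rule sum.mono_neutral_cong_right) auto
    finally have e1: "(\<Sum>j<M. if l * M \<le> j * a then j ^ n else 0) = (\<Sum>j\<in>{cc M a l..<M}. j ^ n)" .
    have "Fs n M = Fs n (cc M a l) + (\<Sum>j\<in>{cc M a l..<M}. j ^ n)"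
      unfolding Fs_def lessThan_atLeast0 using sum.atLeastLessThan_concat[of 0 "cc M a l" M "\<lambda>j. j ^ n"] ccM by simp
    then show ?thesis using e1 by simp
  qed
  have "int (TT M a n) = (\<Sum>l\<in>{1..<a}. int (\<Sum>j<M. if l * M \<le> j * a then j ^ n else 0))"
    unfolding t by (rule of_nat_sum)
  also have "\<dots> = (\<Sum>l\<in>{1..<a}. int (Fs n M) - int (Fs n (cc M a l)))"
    using inner by (rule sum.cong[OF refl])
  finally show ?thesis .
qed

lemma cc_cong:
  assumes pp: "prime p" and cop: "coprime a p" and a0: "a > 0"
    and ca: "[M1 = M2] (mod a)" and cp: "[M1 = M2] (mod p)"
  shows "[cc M1 a l = cc M2 a l] (mod p)"
proof -
  have e0: "int a * int (x div a) = int x - int (x mod a)" for x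
    by (simp add: zdiv_int zmod_int minus_mod_eq_mult_div)
  have e: "int a * int (cc M b l) = int (l * M + a - 1) - int ((l * M + a - 1) mod a)" if "b = a" for M b
    using that e0 unfolding cc_def by simp
  have mm: "(l * M1 + a - 1) mod a = (l * M2 + a - 1) mod a"
  proof -
    have "[l * M1 + (a - 1) = l * M2 + (a - 1)] (mod a)" using ca by (intro cong_add cong_mult cong_refl)
    then show ?thesis using a0 by (simp add: cong_def)
  qed
  have "int a * (int (cc M1 a l) - int (cc M2 a l)) = int l * (int M1 - int M2)"
    using e[of a M1] e[of a M2] mm a0 by (simp add: algebra_simps of_nat_diff)
  moreover have "int p dvd int M1 - int M2" using cp by (simp add: cong_iff_dvd_diff[symmetric] cong_int_iff)
  ultimately have "int p dvd int a * (int (cc M1 a l) - int (cc M2 a l))" by simp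
  moreover have "coprime (int p) (int a)" using cop by (simp add: coprime_commute)
  ultimately have "int p dvd int (cc M1 a l) - int (cc M2 a l)" using coprime_dvd_mult_right_iff by blast
  then show ?thesis by (simp add: cong_iff_dvd_diff[symmetric] cong_int_iff)
qed

lemma TT_cong:
  assumes pp: "prime p" and nd: "\<not> (p - 1) dvd n" and cop: "coprime a p" and a0: "a > 0"
    and N0: "N > 0" and ca: "[N = p] (mod a)" and cp: "[N = p] (mod p)"
  shows "[int (TT N a n) = int (TT p a n)] (mod int p)"
proof -
  have p0: "p > 0" using pp prime_gt_0_nat by blast
  have "[int (Fs n N) - int (Fs n (cc N a l)) = int (Fs n p) - int (Fs n (cc p a l))] (mod int p)" for l
  proof (intro cong_diff)
    show "[int (Fs n N) = int (Fs n p)] (mod int p)" using Fs_cong[OF pp nd cp] by (simp add: cong_int_iff)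
    show "[int (Fs n (cc N a l)) = int (Fs n (cc p a l))] (mod int p)"
      using Fs_cong[OF pp nd cc_cong[OF pp cop a0 ca cp]] by (simp add: cong_int_iff)
  qed
  then show ?thesis unfolding TT_split[OF a0 N0] TT_split[OF a0 p0] by (intro cong_sum) auto
qed


definition terms :: "(int \<times> int \<times> int \<times> int) list" where
"terms = [(1,3,10,11),(1,6,10,11),
 (1,3,11,12),(1,6,11,12),(-1,10,11,12),
 (-1,6,24,25),(1,10,24,25),(-1,12,24,25),
 (1,6,35,36),(1,12,35,36),
 (-1,10,47,48),
 (-1,2,54,55),(-1,6,54,55),(-1,12,54,55),
 (1,10,60,61),
 (1,6,65,66),(1,12,65,66),
 (-1,10,83,84)]"

definition ivs :: "int \<Rightarrow> (int \<times> int \<times> int) list" where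
"ivs g = map (\<lambda>(sg,c,X,Y). (sg, c*X - 180*(g mod c), c*Y - 180*(g mod c))) terms"

fun evi :: "(int \<times> int \<times> int) list \<Rightarrow> int \<Rightarrow> int" where
"evi [] q = 0" | "evi ((s,a,b)#xs) q = (if a \<le> q \<and> q < b then s else 0) + evi xs q"

definition Lq :: "int \<Rightarrow> int" where "Lq q = q div 90 + q div 36 - q div 30"

fun chkl :: "(int \<times> int \<times> int) list \<Rightarrow> (int \<times> int \<times> int) list \<Rightarrow> int list \<Rightarrow> bool" where
"chkl I J [] = True" |
"chkl I J (q#qs) = (2*evi I q + Lq q = 2*evi J (179-q) + Lq (179-q) \<and> chkl I J qs)"

definition chkg :: "int \<Rightarrow> bool" where "chkg g = chkl (ivs g) (ivs (59-g)) [0..89]"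

lemma chk_a: "list_all chkg [0..14]" by code_simp
lemma chk_b: "list_all chkg [15..29]" by code_simp
lemma chk_c: "list_all chkg [30..44]" by code_simp
lemma chk_d: "list_all chkg [45..59]" by code_simp

lemma chkl_iff: "chkl I J qs \<longleftrightarrow> (\<forall>q\<in>set qs. 2*evi I q + Lq q = 2*evi J (179-q) + Lq (179-q))"
  by (induction qs) auto

lemma chk_all: "0 \<le> g \<Longrightarrow> g < 60 \<Longrightarrow> chkg g"
proof -
  assume g: "0 \<le> g" "g < 60"
  have "list_all chkg [0..59]"
  proof -
    have "[0..59] = [0..14] @ [15..29] @ [30..44] @ [45..(59::int)]" by code_simp
    then show ?thesis using chk_a chk_b chk_c chk_d by simp
  qed
  then show ?thesis using g by (simp add: list_all_iff)
qed

lemma fin_half: "0 \<le> g \<Longrightarrow> g < 60 \<Longrightarrow> 0 \<le> q \<Longrightarrow> q \<le> 89 \<Longrightarrow>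
   2*evi (ivs g) q + Lq q = 2*evi (ivs (59-g)) (179-q) + Lq (179-q)"
  using chk_all[of g] unfolding chkg_def chkl_iff by auto

lemma fin_sym: "0 \<le> g \<Longrightarrow> g < 60 \<Longrightarrow> 0 \<le> q \<Longrightarrow> q < 180 \<Longrightarrow>
   2*evi (ivs g) q + Lq q = 2*evi (ivs (59-g)) (179-q) + Lq (179-q)"
proof -
  assume a: "0 \<le> g" "g < 60" "0 \<le> q" "q < 180"
  show ?thesis
  proof (cases "q \<le> 89")
    case True then show ?thesis using fin_half a by auto
  next
    case False
    then have "2*evi (ivs (59-g)) (179-q) + Lq (179-q) = 2*evi (ivs (59-(59-g))) (179-(179-q)) + Lq (179-(179-q))"
      using fin_half[of "59-g" "179-q"] a by auto
    then show ?thesis by simp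
  qed
qed


definition SI :: "nat \<Rightarrow> int \<Rightarrow> int \<Rightarrow> int set" where
  "SI p X Y = {s::int. X * int p < 180 * s \<and> 180 * s < Y * int p}"

definition img :: "nat \<Rightarrow> int \<Rightarrow> int \<Rightarrow> int \<Rightarrow> int set" where
  "img p c X Y = (\<lambda>s. (c * s) mod int p) ` SI p X Y"

lemma lt_div_iff1:
  fixes z N P :: int assumes "P > 0" "\<not> P dvd z"
  shows "N * P < z \<longleftrightarrow> N \<le> z div P"
proof -
  have z: "z = P * (z div P) + z mod P" by simp
  have r: "0 < z mod P" "z mod P < P" using assms by (auto simp: dvd_eq_mod_eq_0 order_le_neq_trans)
  have e: "(z div P + 1) * P = P * (z div P) + P" by (simp add: algebra_simps)
  have e2: "(z div P) * P = P * (z div P)" by (simp add: algebra_simps)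
  show ?thesis
  proof
    assume "N * P < z"
    then have "N * P < (z div P + 1) * P" using z r e by linarith
    then have "N < z div P + 1" using assms(1) by (simp add: mult_less_cancel_right)
    then show "N \<le> z div P" by simp
  next
    assume "N \<le> z div P"
    then have "N * P \<le> (z div P) * P" using assms(1) by (simp add: mult_right_mono)
    then show "N * P < z" using z r e2 by linarith
  qed
qed

lemma lt_div_iff2:
  fixes z M P :: int assumes "P > 0"
  shows "z < M * P \<longleftrightarrow> z div P < M"
proof -
  have z: "z = P * (z div P) + z mod P" by simp
  have r: "0 \<le> z mod P" "z mod P < P" using assms by auto
  have e: "(z div P + 1) * P = P * (z div P) + P" by (simp add: algebra_simps)
  have e2: "(z div P) * P = P * (z div P)" by (simp add: algebra_simps)
  show ?thesis
  proof
    assume "z < M * P"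
    then have "(z div P) * P < M * P" using z r e2 by linarith
    then show "z div P < M" using assms by (simp add: mult_less_cancel_right)
  next
    assume "z div P < M"
    then have "z div P + 1 \<le> M" by simp
    then have "(z div P + 1) * P \<le> M * P" using assms by (simp add: mult_right_mono)
    then show "z < M * P" using z r e by linarith
  qed
qed

lemma prime_not_dvd_180:
  assumes "prime (p::nat)" "p \<ge> 7" shows "\<not> int p dvd 180"
proof
  assume "int p dvd 180"
  then have d: "p dvd 180" by (simp add: int_dvd_int_iff[symmetric])
  have d1: "p dvd 2 \<or> p dvd 90" using prime_dvd_mult_iff[OF assms(1), of 2 90] d by simp
  have d2: "p dvd 90 \<Longrightarrow> p dvd 2 \<or> p dvd 45" using prime_dvd_mult_iff[OF assms(1), of 2 45] by simp
  have d3: "p dvd 45 \<Longrightarrow> p dvd 3 \<or> p dvd 15" using prime_dvd_mult_iff[OF assms(1), of 3 15] by simp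
  have d4: "p dvd 15 \<Longrightarrow> p dvd 3 \<or> p dvd 5" using prime_dvd_mult_iff[OF assms(1), of 3 5] by simp
  have "p dvd 2 \<or> p dvd 3 \<or> p dvd 5" using d1 d2 d3 d4 by blast
  then have "p \<le> 5" by (auto dest: dvd_imp_le)
  then show False using assms(2) by simp
qed

lemma SI_bounds:
  assumes "0 \<le> X" "Y \<le> 180" "p > 0" "s \<in> SI p X Y"
  shows "0 < s" "s < int p"
proof -
  have h: "X * int p < 180 * s" "180 * s < Y * int p" using assms(4) by (auto simp: SI_def)
  have "0 \<le> X * int p" using assms(1,3) by simp
  then show "0 < s" using h(1) by linarith
  have "Y * int p \<le> 180 * int p" using assms(2,3) by (simp add: mult_right_mono)
  then show "s < int p" using h(2) by linarith
qed

lemma finite_SI: assumes "0 \<le> X" "Y \<le> 180" "p > 0" shows "finite (SI p X Y)"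
proof -
  have "SI p X Y \<subseteq> {0..int p}" using SI_bounds[OF assms] by fastforce
  then show ?thesis by (rule finite_subset) simp
qed

lemma SI_cond:
  assumes pp: "prime p" and p7: "p \<ge> 7" and c0: "c > 0" and cs: "c * s = r + j * int p"
    and r: "0 < r" "r < int p"
  shows "s \<in> SI p X Y \<longleftrightarrow> (c * X - 180 * j \<le> 180 * r div int p \<and> 180 * r div int p < c * Y - 180 * j)"
proof -
  have P0: "int p > 0" using p7 by simp
  have nd: "\<not> int p dvd 180 * r"
  proof
    assume "int p dvd 180 * r"
    moreover have "prime (int p)" using pp by simp
    ultimately have "int p dvd 180 \<or> int p dvd r" by (simp add: prime_dvd_mult_iff)
    moreover have "\<not> int p dvd 180" by (rule prime_not_dvd_180[OF pp p7])
    moreover have "\<not> int p dvd r" using r zdvd_imp_le[of "int p" r] by linarith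
    ultimately show False by blast
  qed
  have cs180: "c * (180 * s) = 180 * r + 180 * j * int p"
  proof -
    have "c * (180 * s) = 180 * (c * s)" by simp
    also have "\<dots> = 180 * (r + j * int p)" by (simp only: cs)
    finally show ?thesis by (simp add: algebra_simps)
  qed
  have A: "c * (X * int p) = (c * X - 180 * j) * int p + 180 * j * int p" by (simp add: algebra_simps)
  have A2: "c * (Y * int p) = (c * Y - 180 * j) * int p + 180 * j * int p" by (simp add: algebra_simps)
  have "X * int p < 180 * s \<longleftrightarrow> c * (X * int p) < c * (180 * s)" using c0 by simp
  also have "\<dots> \<longleftrightarrow> (c * X - 180 * j) * int p < 180 * r"
    using cs180 A by linarith
  also have "\<dots> \<longleftrightarrow> c * X - 180 * j \<le> 180 * r div int p" by (rule lt_div_iff1[OF P0 nd])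
  finally have a: "X * int p < 180 * s \<longleftrightarrow> c * X - 180 * j \<le> 180 * r div int p" .
  have "180 * s < Y * int p \<longleftrightarrow> c * (180 * s) < c * (Y * int p)" using c0 by simp
  also have "\<dots> \<longleftrightarrow> 180 * r < (c * Y - 180 * j) * int p"
    using cs180 A2 by linarith
  also have "\<dots> \<longleftrightarrow> 180 * r div int p < c * Y - 180 * j" by (rule lt_div_iff2[OF P0])
  finally have b: "180 * s < Y * int p \<longleftrightarrow> 180 * r div int p < c * Y - 180 * j" .
  show ?thesis unfolding SI_def using a b by simp
qed

lemma char:
  assumes pp: "prime p" and p7: "p \<ge> 7" and c0: "c > 0" and cop: "coprime c (int p)"
    and cd: "c dvd 60" and X0: "0 \<le> X" and Y1: "Y \<le> 180"
    and r: "0 < r" "r < int p" and g: "60 dvd g * int p + r"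
  shows "r \<in> img p c X Y \<longleftrightarrow>
     (c * X - 180 * (g mod c) \<le> 180 * r div int p \<and> 180 * r div int p < c * Y - 180 * (g mod c))"
proof -
  define j where "j = g mod c"
  have j: "0 \<le> j" "j < c" using c0 by (auto simp: j_def)
  have cj: "c dvd r + j * int p"
  proof -
    have d1: "c dvd g * int p + r" using cd g by (rule dvd_trans)
    have ge: "c * (g div c) + j = g" unfolding j_def by simp
    have "(c * (g div c) + j) * int p + r - c * ((g div c) * int p) = r + j * int p" by (simp add: algebra_simps)
    then have e: "g * int p + r - c * ((g div c) * int p) = r + j * int p" by (simp only: ge)
    have "c dvd g * int p + r - c * ((g div c) * int p)" using d1 by (intro dvd_diff) simp_all
    then show ?thesis by (simp only: e)
  qed
  have P0: "int p > 0" using p7 by simp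
  show ?thesis
  proof
    assume "r \<in> img p c X Y"
    then obtain s where s: "s \<in> SI p X Y" "(c * s) mod int p = r" by (auto simp: img_def)
    have sb: "0 < s" "s < int p" using SI_bounds[OF X0 Y1 _ s(1)] p7 by auto
    define i where "i = (c * s) div int p"
    have csi: "c * s = r + i * int p" using div_mult_mod_eq[of "c * s" "int p"] s(2) unfolding i_def by linarith
    have i0: "0 \<le> i" using sb c0 unfolding i_def by (simp add: pos_imp_zdiv_nonneg_iff)
    have "i * int p < c * int p"
    proof -
      have "i * int p \<le> c * s" using csi r by linarith
      also have "c * s < c * int p" using sb c0 by simp
      finally show ?thesis .
    qed
    then have ic: "i < c" using P0 by (simp add: mult_less_cancel_right)
    have "c dvd r + i * int p" unfolding csi[symmetric] by simp
    then have "c dvd (r + i * int p) - (r + j * int p)" using cj by (rule dvd_diff)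
    moreover have "(r + i * int p) - (r + j * int p) = (i - j) * int p" by (simp add: algebra_simps)
    ultimately have "c dvd (i - j) * int p" by simp
    then have "c dvd (i - j)" using cop by (simp add: coprime_dvd_mult_left_iff)
    then have "i = j"
    proof -
      assume d: "c dvd (i - j)"
      then obtain k where k: "i - j = c * k" by (auto elim: dvdE)
      have "\<bar>c * k\<bar> < c" using k i0 ic j by linarith
      then have "k = 0" using c0 by (cases "k = 0") (auto simp: abs_mult)
      then show "i = j" using k by simp
    qed
    then have "c * s = r + j * int p" using csi by simp
    then show "c * X - 180 * (g mod c) \<le> 180 * r div int p \<and> 180 * r div int p < c * Y - 180 * (g mod c)"
      using SI_cond[OF pp p7 c0 _ r, of s j X Y] s(1) unfolding j_def by simp
  next
    assume h: "c * X - 180 * (g mod c) \<le> 180 * r div int p \<and> 180 * r div int p < c * Y - 180 * (g mod c)"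
    define s where "s = (r + j * int p) div c"
    have cs: "c * s = r + j * int p" unfolding s_def using cj by simp
    have "s \<in> SI p X Y" using SI_cond[OF pp p7 c0 cs r, of X Y] h unfolding j_def by simp
    moreover have "(c * s) mod int p = r" using cs r by simp
    ultimately show "r \<in> img p c X Y" unfolding img_def by force
  qed
qed


lemma set_terms: "\<tau> \<in> set terms \<Longrightarrow> (case \<tau> of (sg, c, X, Y) \<Rightarrow> c > 0 \<and> c dvd 60 \<and> 0 \<le> X \<and> Y \<le> 180)"
  unfolding terms_def by auto

lemma coprime_c:
  assumes pp: "prime p" and p7: "p \<ge> 7" and c0: "c > 0" and cd: "c dvd 60"
  shows "coprime c (int p)"
proof -
  have "\<not> int p dvd c"
  proof
    assume "int p dvd c"
    moreover have "c dvd 180" using cd dvd_trans[of c 60 180] by simp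
    ultimately have "int p dvd 180" by (rule dvd_trans)
    then show False using prime_not_dvd_180[OF pp p7] by simp
  qed
  moreover have "prime (int p)" using pp by simp
  ultimately have "coprime (int p) c" using prime_imp_coprime by blast
  then show ?thesis by (simp add: coprime_commute)
qed

lemma term_cong:
  assumes pp: "prime p" and p7: "p \<ge> 7" and c0: "c > 0" and cop: "coprime c (int p)"
    and X0: "0 \<le> X" and Y1: "Y \<le> 180"
  shows "[(\<Sum>s\<in>SI p X Y. (c * s) ^ t) = (\<Sum>r\<in>{1..<int p}. if r \<in> img p c X Y then r ^ t else 0)] (mod int p)"
proof -
  have p0: "p > 0" using p7 by simp
  have fin: "finite (SI p X Y)" by (rule finite_SI[OF X0 Y1 p0])
  have inj: "inj_on (\<lambda>s. (c * s) mod int p) (SI p X Y)"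
  proof (rule inj_onI)
    fix x y assume x: "x \<in> SI p X Y" and y: "y \<in> SI p X Y" and e: "(c * x) mod int p = (c * y) mod int p"
    have bx: "0 < x" "x < int p" using SI_bounds[OF X0 Y1 p0 x] by auto
    have by': "0 < y" "y < int p" using SI_bounds[OF X0 Y1 p0 y] by auto
    have "int p dvd c * x - c * y" using e by (simp add: mod_eq_dvd_iff)
    then have "int p dvd c * (x - y)" by (simp add: right_diff_distrib)
    then have "int p dvd (x - y)" using cop by (simp add: coprime_commute coprime_dvd_mult_right_iff)
    then obtain k where k: "x - y = int p * k" by (auto elim: dvdE)
    have "\<bar>int p * k\<bar> < int p" using k bx by' by linarith
    then have "k = 0" using p0 by (cases "k = 0") (auto simp: abs_mult)
    then show "x = y" using k by simp
  qed
  have sub: "img p c X Y \<subseteq> {1..<int p}"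
  proof
    fix r assume "r \<in> img p c X Y"
    then obtain s where s: "s \<in> SI p X Y" "r = (c * s) mod int p" by (auto simp: img_def)
    have bs: "0 < s" "s < int p" using SI_bounds[OF X0 Y1 p0 s(1)] by auto
    have "\<not> int p dvd c * s"
    proof
      assume "int p dvd c * s"
      then have "int p dvd s" using cop by (simp add: coprime_commute coprime_dvd_mult_right_iff)
      then show False using bs zdvd_imp_le[of "int p" s] by linarith
    qed
    then have "r \<noteq> 0" using s(2) by (simp add: dvd_eq_mod_eq_0)
    moreover have "0 \<le> r" "r < int p" using s(2) p0 by auto
    ultimately show "r \<in> {1..<int p}" by auto
  qed
  have "[(\<Sum>s\<in>SI p X Y. (c * s) ^ t) = (\<Sum>s\<in>SI p X Y. ((c * s) mod int p) ^ t)] (mod int p)"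
    by (intro cong_sum cong_pow) (simp add: cong_def)
  also have "(\<Sum>s\<in>SI p X Y. ((c * s) mod int p) ^ t) = (\<Sum>r\<in>img p c X Y. r ^ t)"
    unfolding img_def by (subst sum.reindex[OF inj]) (simp add: o_def)
  also have "\<dots> = (\<Sum>r\<in>{1..<int p}. if r \<in> img p c X Y then r ^ t else 0)"
  proof -
    have "{1..<int p} \<inter> img p c X Y = img p c X Y" using sub by blast
    then show ?thesis using sum.inter_restrict[of "{1..<int p}" "\<lambda>r. r ^ t" "img p c X Y"] by simp
  qed
  finally show ?thesis .
qed

lemma evi_sum: "evi xs q = sum_list (map (\<lambda>(s, a, b). if a \<le> q \<and> q < b then s else 0) xs)"
  by (induction xs) auto

lemma evi_ivs: "evi (ivs g) q = sum_list (map (\<lambda>(sg, c, X, Y). if c * X - 180 * (g mod c) \<le> q \<and> q < c * Y - 180 * (g mod c) then sg else 0) terms)"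
  unfolding evi_sum ivs_def map_map by (intro arg_cong[where f = sum_list] map_cong refl) (auto simp: o_def)

definition wt :: "nat \<Rightarrow> int \<Rightarrow> int \<times> int \<times> int \<times> int \<Rightarrow> int" where
  "wt p r \<tau> = (case \<tau> of (sg, c, X, Y) \<Rightarrow> if r \<in> img p c X Y then sg else 0)"

lemma w_eq:
  assumes pp: "prime p" and p7: "p \<ge> 7" and r: "0 < r" "r < int p" and g: "60 dvd g * int p + r"
  shows "sum_list (map (wt p r) terms) = evi (ivs g) (180 * r div int p)"
  unfolding evi_ivs
proof (intro arg_cong[where f = sum_list] map_cong refl)
  fix \<tau> assume "\<tau> \<in> set terms"
  note mem = this
  obtain sg c X Y where te: "\<tau> = (sg, c, X, Y)" using prod_cases4 by blast
  have tp: "c > 0 \<and> c dvd 60 \<and> 0 \<le> X \<and> Y \<le> 180" using set_terms[OF mem] te by simp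
  then have t: "\<tau> = (sg, c, X, Y)" "c > 0" "c dvd 60" "0 \<le> X" "Y \<le> 180" using te by auto
  have cop: "coprime c (int p)" by (rule coprime_c[OF pp p7 t(2,3)])
  show "wt p r \<tau> = (case \<tau> of (sg, c, X, Y) \<Rightarrow> if c * X - 180 * (g mod c) \<le> 180 * r div int p \<and> 180 * r div int p < c * Y - 180 * (g mod c) then sg else 0)"
    unfolding t(1) wt_def using char[OF pp p7 t(2) cop t(3,4,5) r g] by simp
qed

definition Rint :: "nat \<Rightarrow> nat \<Rightarrow> int" where
  "Rint p t = sum_list (map (\<lambda>(sg, c, X, Y). sg * (\<Sum>s\<in>SI p X Y. (c * s) ^ t)) terms)"

lemma sum_list_cong_mod:
  "(\<And>x. x \<in> set xs \<Longrightarrow> [f x = g x] (mod m)) \<Longrightarrow> [sum_list (map f xs) = sum_list (map g xs)] (mod m)"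
  by (induction xs) (auto intro: cong_add)

lemma sum_list_sum_swap:
  "sum_list (map (\<lambda>x. \<Sum>r\<in>A. h x r) xs) = (\<Sum>r\<in>A. sum_list (map (\<lambda>x. h x r) xs))"
  by (induction xs) (auto simp: sum.distrib)

lemma R_cong:
  assumes pp: "prime p" and p7: "p \<ge> 7"
  shows "[Rint p t = (\<Sum>r\<in>{1..<int p}. r ^ t * sum_list (map (wt p r) terms))] (mod int p)"
proof -
  have "[Rint p t = sum_list (map (\<lambda>\<tau>. \<Sum>r\<in>{1..<int p}. r ^ t * wt p r \<tau>) terms)] (mod int p)"
    unfolding Rint_def
  proof (rule sum_list_cong_mod)
    fix \<tau> assume "\<tau> \<in> set terms"
    note mem = this
    obtain sg c X Y where te: "\<tau> = (sg, c, X, Y)" using prod_cases4 by blast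
    have tp: "c > 0 \<and> c dvd 60 \<and> 0 \<le> X \<and> Y \<le> 180" using set_terms[OF mem] te by simp
    then have t: "\<tau> = (sg, c, X, Y)" "c > 0" "c dvd 60" "0 \<le> X" "Y \<le> 180" using te by auto
    have cop: "coprime c (int p)" by (rule coprime_c[OF pp p7 t(2,3)])
    have "[sg * (\<Sum>s\<in>SI p X Y. (c * s) ^ t) = sg * (\<Sum>r\<in>{1..<int p}. if r \<in> img p c X Y then r ^ t else 0)] (mod int p)"
      by (intro cong_mult cong_refl term_cong[OF pp p7 t(2) cop t(4,5)])
    moreover have "sg * (\<Sum>r\<in>{1..<int p}. if r \<in> img p c X Y then r ^ t else 0) = (\<Sum>r\<in>{1..<int p}. r ^ t * wt p r \<tau>)"
      unfolding sum_distrib_left t(1) wt_def by (intro sum.cong refl) simp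
    ultimately show "[(case \<tau> of (sg, c, X, Y) \<Rightarrow> sg * (\<Sum>s\<in>SI p X Y. (c * s) ^ t)) = (\<Sum>r\<in>{1..<int p}. r ^ t * wt p r \<tau>)] (mod int p)"
      using t(1) by simp
  qed
  also have "sum_list (map (\<lambda>\<tau>. \<Sum>r\<in>{1..<int p}. r ^ t * wt p r \<tau>) terms) = (\<Sum>r\<in>{1..<int p}. r ^ t * sum_list (map (wt p r) terms))"
    unfolding sum_list_sum_swap by (intro sum.cong refl) (simp add: sum_list_const_mult)
  finally show ?thesis .
qed

lemma TT_weights:
  assumes p0: "p > 0" and a0: "a > 0" and ad: "a dvd 180"
  shows "int (TT p a t) = (\<Sum>r\<in>{1..<int p}. r ^ t * ((180 * r div int p) div (180 div int a)))"
proof -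
  have "int (TT p a t) = (\<Sum>j<p. int j ^ t * (int j * int a div int p))"
    unfolding TT_def by (simp add: zdiv_int)
  also have "\<dots> = (\<Sum>r\<in>{0..<int p}. r ^ t * (r * int a div int p))"
  proof -
    have "int ` {0..<p} = {0..<int p}" by (simp add: image_int_atLeastLessThan)
    moreover have "(\<Sum>j<p. int j ^ t * (int j * int a div int p)) = (\<Sum>r\<in>int ` {0..<p}. r ^ t * (r * int a div int p))"
      by (subst sum.reindex) (auto simp: lessThan_atLeast0)
    ultimately show ?thesis by simp
  qed
  also have "\<dots> = (\<Sum>r\<in>{1..<int p}. r ^ t * (r * int a div int p))"
  proof -
    have "{0..<int p} = insert 0 {1..<int p}" using p0 by auto
    then show ?thesis by simp
  qed
  also have "\<dots> = (\<Sum>r\<in>{1..<int p}. r ^ t * ((180 * r div int p) div (180 div int a)))"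
  proof (intro sum.cong refl)
    fix r :: int
    obtain d where d: "180 = int a * d" using ad by (metis dvd_def int_dvd_int_iff of_nat_numeral)
    have "0 < int a * d" using d by simp
    then have d0: "d > 0" using a0 by (simp add: zero_less_mult_iff)
    have "180 div int a = d" by (subst d) (use a0 in simp)
    moreover have "(180 * r div int p) div d = (r * int a) div int p"
    proof -
      have e: "180 * r = (r * int a) * d" by (subst d) (simp add: algebra_simps)
      have "(180 * r div int p) div d = 180 * r div (int p * d)" using d0 by (simp add: zdiv_zmult2_eq)
      also have "\<dots> = ((r * int a) * d) div (int p * d)" by (simp only: e)
      also have "\<dots> = (r * int a) div int p" using d0 by simp
      finally show ?thesis .
    qed
    ultimately show "r ^ t * (r * int a div int p) = r ^ t * ((180 * r div int p) div (180 div int a))" by simp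
  qed
  finally show ?thesis .
qed

lemma reflect:
  assumes pp: "prime p" and p7: "p \<ge> 7" and t: "odd t"
    and f: "\<And>r. r \<in> {1..<int p} \<Longrightarrow> f (int p - r) = f r"
  shows "[(\<Sum>r\<in>{1..<int p}. r ^ t * f r) = 0] (mod int p)"
proof -
  define S where "S = (\<Sum>r\<in>{1..<int p}. r ^ t * f r)"
  have "S = (\<Sum>r\<in>{1..<int p}. (int p - r) ^ t * f (int p - r))"
    unfolding S_def
    by (rule sum.reindex_bij_witness[of _ "\<lambda>r. int p - r" "\<lambda>r. int p - r"]) auto
  also have "\<dots> = (\<Sum>r\<in>{1..<int p}. (int p - r) ^ t * f r)"
    using f by (intro sum.cong refl) simp
  also have "[\<dots> = (\<Sum>r\<in>{1..<int p}. (- r) ^ t * f r)] (mod int p)"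
    by (intro cong_sum cong_mult cong_pow cong_refl) (simp add: cong_def)
  also have "(\<Sum>r\<in>{1..<int p}. (- r) ^ t * f r) = - S"
    unfolding S_def using t by (simp add: sum_negf)
  finally have "[S = - S] (mod int p)" .
  then have "int p dvd 2 * S" by (simp add: cong_iff_dvd_diff)
  moreover have "prime (int p)" using pp by simp
  moreover have "\<not> int p dvd 2" using p7 zdvd_imp_le[of "int p" 2] by linarith
  ultimately have "int p dvd S" by (simp add: prime_dvd_mult_iff)
  then show ?thesis unfolding S_def by (simp add: cong_0_iff)
qed



lemma nd180:
  assumes pp: "prime p" and p7: "p \<ge> 7" and r: "0 < r" "r < int p"
  shows "\<not> int p dvd 180 * r"
proof
  assume "int p dvd 180 * r"
  moreover have "prime (int p)" using pp by simp
  ultimately have "int p dvd 180 \<or> int p dvd r" by (simp add: prime_dvd_mult_iff)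
  moreover have "\<not> int p dvd 180" by (rule prime_not_dvd_180[OF pp p7])
  moreover have "\<not> int p dvd r" using r zdvd_imp_le[of "int p" r] by linarith
  ultimately show False by blast
qed

lemma q_reflect:
  assumes pp: "prime p" and p7: "p \<ge> 7" and r: "0 < r" "r < int p"
  shows "180 * (int p - r) div int p = 179 - 180 * r div int p"
proof -
  define Q where "Q = 180 * r div int p"
  define \<rho> where "\<rho> = 180 * r mod int p"
  have P0: "int p > 0" using p7 by simp
  have qr: "180 * r = Q * int p + \<rho>" unfolding Q_def \<rho>_def by simp
  have "\<rho> \<noteq> 0" using nd180[OF pp p7 r] unfolding \<rho>_def by (simp add: dvd_eq_mod_eq_0)
  moreover have "0 \<le> \<rho>" "\<rho> < int p" using P0 unfolding \<rho>_def by auto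
  ultimately have rb: "0 < \<rho>" "\<rho> < int p" by auto
  have e: "180 * (int p - r) = (int p - \<rho>) + (179 - Q) * int p" using qr by (simp add: algebra_simps)
  have "180 * (int p - r) div int p = (int p - \<rho>) div int p + (179 - Q)"
    unfolding e using P0 by simp
  moreover have "(int p - \<rho>) div int p = 0" using rb by (intro div_pos_pos_trivial) auto
  ultimately show ?thesis unfolding Q_def by simp
qed

lemma D_main:
  assumes pp: "prime p" and p7: "p \<ge> 7" and t: "odd t"
  shows "[2 * Rint p t + int (TT p 2 t) + int (TT p 5 t) - int (TT p 6 t) = 0] (mod int p)"
proof -
  have p0: "p > 0" using p7 by simp
  have cop60: "coprime (int p) 60"
  proof -
    have "\<not> int p dvd 60"
    proof
      assume "int p dvd 60"
      then have "int p dvd 180" using dvd_trans[of "int p" 60 180] by simp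
      then show False using prime_not_dvd_180[OF pp p7] by simp
    qed
    moreover have "prime (int p)" using pp by simp
    ultimately show ?thesis using prime_imp_coprime by blast
  qed
  obtain pinv where pinv: "[int p * pinv = 1] (mod 60)" using cong_solve_coprime_int[OF cop60] by blast
  define \<gamma> where "\<gamma> r = (- r * pinv) mod 60" for r
  define q where "q r = 180 * r div int p" for r
  define Dw where "Dw r = 2 * evi (ivs (\<gamma> r)) (q r) + Lq (q r)" for r
  have gb: "0 \<le> \<gamma> r" "\<gamma> r < 60" for r unfolding \<gamma>_def by auto
  have gc: "[\<gamma> r = - r * pinv] (mod 60)" for r unfolding \<gamma>_def by simp
  have g60: "60 dvd \<gamma> r * int p + r" for r
  proof -
    have "[\<gamma> r * int p + r = (- r * pinv) * int p + r] (mod 60)"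
      by (intro cong_add cong_mult gc cong_refl)
    also have "(- r * pinv) * int p + r = r - r * (int p * pinv)" by (simp add: algebra_simps)
    also have "[r - r * (int p * pinv) = r - r * 1] (mod 60)"
      by (intro cong_diff cong_mult cong_refl pinv)
    finally show ?thesis by (simp add: cong_0_iff)
  qed
  have g_reflect: "\<gamma> (int p - r) = 59 - \<gamma> r" for r
  proof -
    have "[- (int p - r) * pinv = - (int p * pinv) + r * pinv] (mod 60)" by (simp add: algebra_simps)
    also have "[- (int p * pinv) + r * pinv = - 1 + r * pinv] (mod 60)"
      by (intro cong_add cong_minus_minus_iff[THEN iffD2] pinv cong_refl)
    also have "r * pinv = - (- r * pinv)" by simp
    also have "[- 1 + - (- r * pinv) = - 1 + - \<gamma> r] (mod 60)"
      by (intro cong_add cong_refl cong_minus_minus_iff[THEN iffD2] cong_sym[OF gc])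
    finally have c: "[- (int p - r) * pinv = - 1 - \<gamma> r] (mod 60)" by simp
    have "\<gamma> (int p - r) = (- 1 - \<gamma> r) mod 60" using c unfolding \<gamma>_def cong_def by simp
    also have "- 1 - \<gamma> r = (59 - \<gamma> r) + (- 1) * 60" by simp
    also have "((59 - \<gamma> r) + (- 1) * 60) mod 60 = (59 - \<gamma> r) mod 60" by (rule mod_mult_self1)
    also have "\<dots> = 59 - \<gamma> r" using gb[of r] by (intro mod_pos_pos_trivial) auto
    finally show ?thesis .
  qed
  have qb: "0 \<le> q r" "q r < 180" if r: "r \<in> {1..<int p}" for r
  proof -
    have "0 \<le> 180 * r" using r by auto
    then show "0 \<le> q r" unfolding q_def using p0 by (simp add: pos_imp_zdiv_nonneg_iff)
    have "180 * r < 180 * int p" using r by auto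
    then show "q r < 180" unfolding q_def using lt_div_iff2[of "int p" "180 * r" 180] p0 by simp
  qed
  have Dsym: "Dw (int p - r) = Dw r" if r: "r \<in> {1..<int p}" for r
  proof -
    have "q (int p - r) = 179 - q r" unfolding q_def using q_reflect[OF pp p7] r by auto
    then show ?thesis unfolding Dw_def g_reflect using fin_sym[OF gb[of r] qb[OF r]] by simp
  qed
  have e1: "[2 * Rint p t = (\<Sum>r\<in>{1..<int p}. r ^ t * (2 * sum_list (map (wt p r) terms)))] (mod int p)"
  proof -
    have "[2 * Rint p t = 2 * (\<Sum>r\<in>{1..<int p}. r ^ t * sum_list (map (wt p r) terms))] (mod int p)"
      by (intro cong_mult cong_refl R_cong[OF pp p7])
    also have "2 * (\<Sum>r\<in>{1..<int p}. r ^ t * sum_list (map (wt p r) terms)) = (\<Sum>r\<in>{1..<int p}. r ^ t * (2 * sum_list (map (wt p r) terms)))"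
      by (simp add: sum_distrib_left algebra_simps)
    finally show ?thesis .
  qed
  have e2: "int (TT p 2 t) + int (TT p 5 t) - int (TT p 6 t) = (\<Sum>r\<in>{1..<int p}. r ^ t * Lq (q r))"
  proof -
    have t2: "int (TT p 2 t) = (\<Sum>r\<in>{1..<int p}. r ^ t * (q r div 90))"
      using TT_weights[OF p0, of 2 t] unfolding q_def by simp
    have t5: "int (TT p 5 t) = (\<Sum>r\<in>{1..<int p}. r ^ t * (q r div 36))"
      using TT_weights[OF p0, of 5 t] unfolding q_def by simp
    have t6: "int (TT p 6 t) = (\<Sum>r\<in>{1..<int p}. r ^ t * (q r div 30))"
      using TT_weights[OF p0, of 6 t] unfolding q_def by simp
    have "(\<Sum>r\<in>{1..<int p}. r ^ t * Lq (q r)) = (\<Sum>r\<in>{1..<int p}. r ^ t * (q r div 90) + r ^ t * (q r div 36) - r ^ t * (q r div 30))"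
      unfolding Lq_def by (intro sum.cong refl) (simp add: algebra_simps)
    also have "\<dots> = (\<Sum>r\<in>{1..<int p}. r ^ t * (q r div 90)) + (\<Sum>r\<in>{1..<int p}. r ^ t * (q r div 36)) - (\<Sum>r\<in>{1..<int p}. r ^ t * (q r div 30))"
      by (simp only: sum_subtractf sum.distrib)
    finally show ?thesis unfolding t2 t5 t6 by simp
  qed
  have e3: "(\<Sum>r\<in>{1..<int p}. r ^ t * (2 * sum_list (map (wt p r) terms))) + (\<Sum>r\<in>{1..<int p}. r ^ t * Lq (q r))
      = (\<Sum>r\<in>{1..<int p}. r ^ t * Dw r)"
    unfolding sum.distrib[symmetric]
  proof (intro sum.cong refl)
    fix r assume r: "r \<in> {1..<int p}"
    have "sum_list (map (wt p r) terms) = evi (ivs (\<gamma> r)) (q r)"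
      unfolding q_def using w_eq[OF pp p7 _ _ g60[of r]] r by auto
    then show "r ^ t * (2 * sum_list (map (wt p r) terms)) + r ^ t * Lq (q r) = r ^ t * Dw r"
      unfolding Dw_def by (simp add: algebra_simps)
  qed
  have "[2 * Rint p t + int (TT p 2 t) + int (TT p 5 t) - int (TT p 6 t)
      = (\<Sum>r\<in>{1..<int p}. r ^ t * (2 * sum_list (map (wt p r) terms))) + (\<Sum>r\<in>{1..<int p}. r ^ t * Lq (q r))] (mod int p)"
  proof -
    have "2 * Rint p t + int (TT p 2 t) + int (TT p 5 t) - int (TT p 6 t) = 2 * Rint p t + (int (TT p 2 t) + int (TT p 5 t) - int (TT p 6 t))"
      by simp
    also have "\<dots> = 2 * Rint p t + (\<Sum>r\<in>{1..<int p}. r ^ t * Lq (q r))" by (simp only: e2)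
    finally have s1: "2 * Rint p t + int (TT p 2 t) + int (TT p 5 t) - int (TT p 6 t) = 2 * Rint p t + (\<Sum>r\<in>{1..<int p}. r ^ t * Lq (q r))" .
    show ?thesis unfolding s1 by (rule cong_add[OF e1 cong_refl])
  qed
  also have "(\<Sum>r\<in>{1..<int p}. r ^ t * (2 * sum_list (map (wt p r) terms))) + (\<Sum>r\<in>{1..<int p}. r ^ t * Lq (q r))
     = (\<Sum>r\<in>{1..<int p}. r ^ t * Dw r)" by (rule e3)
  also have "[\<dots> = 0] (mod int p)" by (rule reflect[where f = Dw, OF pp p7 t Dsym])
  finally show ?thesis .
qed


lemma cmp1: "(of_int X / 180 * of_nat p < (of_int s :: rat)) \<longleftrightarrow> X * int p < 180 * s"
proof -
  have "(of_int X / 180 * of_nat p < (of_int s :: rat)) \<longleftrightarrow> (of_int (X * int p) :: rat) < of_int (180 * s)"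
    by (simp add: field_simps)
  then show ?thesis by (simp only: of_int_less_iff)
qed

lemma cmp2: "((of_int s :: rat) < of_int Y / 180 * of_nat p) \<longleftrightarrow> 180 * s < Y * int p"
proof -
  have "((of_int s :: rat) < of_int Y / 180 * of_nat p) \<longleftrightarrow> (of_int (180 * s) :: rat) < of_int (Y * int p)"
    by (simp add: field_simps)
  then show ?thesis by (simp only: of_int_less_iff)
qed

definition SS :: "nat \<Rightarrow> nat \<Rightarrow> int \<Rightarrow> int \<Rightarrow> rat" where
  "SS p t X Y = of_int (\<Sum>s\<in>SI p X Y. s ^ t)"

lemma S_sum_SI:
  assumes "x = of_int X / 180" "y = of_int Y / 180"
  shows "S_sum p l x y = SS p l X Y"
proof -
  have "{s::int. x * of_nat p < of_int s \<and> of_int s < y * of_nat p} = SI p X Y"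
    unfolding SI_def assms cmp1 cmp2 by simp
  then show ?thesis unfolding S_sum_def SS_def by simp
qed

lemma Rint_expand:
  "of_int (Rint p t) = (3 ^ t + 6 ^ t) * SS p t 10 11
     + (3 ^ t + 6 ^ t - 10 ^ t) * SS p t 11 12
     - (6 ^ t - 10 ^ t + 12 ^ t) * SS p t 24 25
     + (6 ^ t + 12 ^ t) * SS p t 35 36
     - 10 ^ t * SS p t 47 48
     - (2 ^ t + 6 ^ t + 12 ^ t) * SS p t 54 55
     + 10 ^ t * SS p t 60 61
     + (6 ^ t + 12 ^ t) * SS p t 65 66
     - 10 ^ t * SS p t 83 84"
proof -
  have h: "(\<Sum>s\<in>SI p X Y. (c * s) ^ t) = c ^ t * (\<Sum>s\<in>SI p X Y. s ^ t)" for c X Y :: int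
    by (simp add: sum_distrib_left power_mult_distrib)
  show ?thesis unfolding Rint_def terms_def SS_def by (simp add: h sum_distrib_right[symmetric] algebra_simps del: of_int_sum)
qed

lemma p4_mod60:
  "list_all (\<lambda>r. gcd r 60 \<noteq> 1 \<or> r ^ 4 mod 60 = 1) [0..<60::nat]" by code_simp

lemma pow4: assumes "coprime p (60::nat)" shows "[p ^ 4 = 1] (mod 60)"
proof -
  have all: "\<forall>r\<in>set [0..<60::nat]. gcd r 60 \<noteq> 1 \<or> r ^ 4 mod 60 = 1"
    using p4_mod60 by (simp only: list_all_iff)
  have mem: "p mod 60 \<in> set [0..<60::nat]" unfolding set_upt by simp
  have g1: "gcd p 60 = 1" using assms by (simp only: coprime_iff_gcd_eq_1)
  have "gcd (p mod 60) 60 = gcd 60 (p mod 60)" by (rule gcd.commute)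
  also have "\<dots> = gcd p 60" by (rule gcd_red_nat[symmetric])
  finally have g: "gcd (p mod 60) 60 = 1" using g1 by simp
  have "(p mod 60) ^ 4 mod 60 = 1" using bspec[OF all mem] g by blast
  then show ?thesis by (simp add: cong_def power_mod)
qed

lemma powi_facts:
  fixes a p k :: nat
  assumes a0: "a > 0" and pk: "2 * k \<le> p + 2 * k"
  shows "(of_nat a :: rat) powi (int p - 2 * int k) * of_nat a ^ (2 * k) = of_nat a ^ p"
proof -
  have "(of_nat a :: rat) powi (int p - 2 * int k) * of_nat a ^ (2 * k) = of_nat a powi (int p - 2 * int k) * of_nat a powi (int (2 * k))"
    by (subst power_int_of_nat) (rule refl)
  also have "\<dots> = of_nat a powi (int p - 2 * int k + int (2 * k))" by (rule power_int_add[symmetric]) (use a0 in simp)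
  also have "int p - 2 * int k + int (2 * k) = int p" by simp
  finally show ?thesis by simp
qed

lemma powi_pdv:
  fixes a p :: nat
  assumes pp: "prime p" and nd: "\<not> p dvd a"
  shows "pdv p 0 ((of_nat a :: rat) powi e)"
proof (cases "e \<ge> 0")
  case True
  then show ?thesis using pdv_nat[OF pp, of "a ^ nat e"] by (simp add: power_int_def)
next
  case False
  have "\<not> int p dvd int a ^ nat (- e)"
  proof
    assume "int p dvd int a ^ nat (- e)"
    moreover have "prime (int p)" using pp by simp
    ultimately have "int p dvd int a" using prime_dvd_power by blast
    then show False using nd by simp
  qed
  then have "pdv p 0 (1 / of_int (int a ^ nat (- e)))" using pdv_div_int[OF pp pdv_1[OF pp]] by blast
  then show ?thesis using False by (simp add: power_int_def power_inverse divide_inverse)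
qed

theorem mainTheorem3:
  fixes p k :: nat
  assumes "prime p" and "p \<ge> 7" and "k \<ge> 1" and "\<not> (p - 1) dvd 2 * k"
  defines "t \<equiv> 2 * k - 1"
  shows "rat_cong (C_coef p k 2 5 6 * bernoulli (2 * k))
    ((3 ^ t + 6 ^ t) * S_sum p t (1/18) (11/180)
     + (3 ^ t + 6 ^ t - 10 ^ t) * S_sum p t (11/180) (1/15)
     - (6 ^ t - 10 ^ t + 12 ^ t) * S_sum p t (2/15) (5/36)
     + (6 ^ t + 12 ^ t) * S_sum p t (7/36) (1/5)
     - 10 ^ t * S_sum p t (47/180) (4/15)
     - (2 ^ t + 6 ^ t + 12 ^ t) * S_sum p t (3/10) (11/36)
     + 10 ^ t * S_sum p t (1/3) (61/180)
     + (6 ^ t + 12 ^ t) * S_sum p t (13/36) (11/30)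
     - 10 ^ t * S_sum p t (83/180) (7/15)) p"
proof -
  note pp = assms(1) and p7 = assms(2) and k1 = assms(3) and ndk = assms(4)
  define m where "m = 2 * k"
  have m1: "m \<ge> 1" and m2: "m \<ge> 2" using k1 unfolding m_def by auto
  have tm: "t = m - 1" unfolding t_def m_def by simp
  have todd: "odd t" unfolding t_def using k1 by simp
  have p3: "p \<ge> 3" using p7 by simp
  have nd: "\<not> (p - 1) dvd m" using ndk unfolding m_def .
  define E where "E = 4 * m + 1"
  define N where "N = p ^ E"
  have E2: "E \<ge> m + 2" unfolding E_def using m1 by simp
  define b where "b = bernoulli m / of_nat m"
  have bm: "pdv p 0 b" unfolding b_def by (rule bern_div_int[OF pp p3 m1 nd])
  define u where "u a = (of_nat a :: rat) powi (int p - 2 * int k)" for a :: nat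
  define TN where "TN a = TT N a t" for a
  define TP where "TP a = TT p a t" for a
  define V where "V a = (of_nat a ^ m - 1) * bernoulli m / of_nat m - of_nat a ^ (m - 1) * of_nat (TN a)" for a :: nat
  have small: "\<not> p dvd a" "coprime a p" if "a \<in> {2, 5, 6}" for a
  proof -
    show nd': "\<not> p dvd a" using that p7 by (auto dest: dvd_imp_le)
    show "coprime a p" using prime_imp_coprime[OF pp nd'] by (simp add: coprime_commute)
  qed
  have Vp: "pdv p 1 (V a)" if "a \<in> {2, 5, 6}" for a
    unfolding V_def TN_def N_def tm using voronoi_rat[OF pp p3 small(2)[OF that] m1 E2] by simp
  have u0: "pdv p 0 (u a)" if "a \<in> {2, 5, 6}" for a
    unfolding u_def by (rule powi_pdv[OF pp small(1)[OF that]])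
  have Ia: "(u a - 1) * b = (of_nat a ^ p - 1) * b - u a * V a - of_nat a ^ (p - 1) * of_nat (TN a)"
    if a0: "a > 0" for a :: nat
  proof -
    have ua: "u a * of_nat a ^ m = of_nat a ^ p"
      unfolding u_def m_def by (rule powi_facts[OF a0]) simp
    have "of_nat a * (u a * of_nat a ^ (m - 1)) = of_nat a * (of_nat a ^ (p - 1) :: rat)"
    proof -
      have "of_nat a * (u a * of_nat a ^ (m - 1)) = u a * of_nat a ^ m"
        using m1 by (cases m) (auto simp: algebra_simps)
      also have "\<dots> = of_nat a ^ p" by (rule ua)
      also have "\<dots> = of_nat a * of_nat a ^ (p - 1)" using p7 by (cases p) auto
      finally show ?thesis .
    qed
    then have ua1: "u a * of_nat a ^ (m - 1) = of_nat a ^ (p - 1)" using a0 by simp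
    have "u a * V a = (u a * of_nat a ^ m - u a) * b - (u a * of_nat a ^ (m - 1)) * of_nat (TN a)"
      unfolding V_def b_def using m1 by (simp add: field_simps)
    also have "\<dots> = (of_nat a ^ p - u a) * b - of_nat a ^ (p - 1) * of_nat (TN a)"
      unfolding ua ua1 ..
    finally show ?thesis by (simp add: algebra_simps)
  qed
  have L: "C_coef p k 2 5 6 * bernoulli (2 * k) = ((u 2 - 1) * b + (u 5 - 1) * b - (u 6 - 1) * b) / 2"
  proof -
    have "of_nat k \<noteq> (0::rat)" using k1 by simp
    then show ?thesis unfolding C_coef_def u_def b_def m_def by (simp add: field_simps)
  qed
  have R: "(3 ^ t + 6 ^ t) * S_sum p t (1/18) (11/180)
     + (3 ^ t + 6 ^ t - 10 ^ t) * S_sum p t (11/180) (1/15)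
     - (6 ^ t - 10 ^ t + 12 ^ t) * S_sum p t (2/15) (5/36)
     + (6 ^ t + 12 ^ t) * S_sum p t (7/36) (1/5)
     - 10 ^ t * S_sum p t (47/180) (4/15)
     - (2 ^ t + 6 ^ t + 12 ^ t) * S_sum p t (3/10) (11/36)
     + 10 ^ t * S_sum p t (1/3) (61/180)
     + (6 ^ t + 12 ^ t) * S_sum p t (13/36) (11/30)
     - 10 ^ t * S_sum p t (83/180) (7/15) = of_int (Rint p t)"
    unfolding Rint_expand
    by (simp add: S_sum_SI[of "1/18" 10 "11/180" 11] S_sum_SI[of "11/180" 11 "1/15" 12]
        S_sum_SI[of "2/15" 24 "5/36" 25] S_sum_SI[of "7/36" 35 "1/5" 36]
        S_sum_SI[of "47/180" 47 "4/15" 48] S_sum_SI[of "3/10" 54 "11/36" 55]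
        S_sum_SI[of "1/3" 60 "61/180" 61] S_sum_SI[of "13/36" 65 "11/30" 66]
        S_sum_SI[of "83/180" 83 "7/15" 84])
  have F1: "int p dvd (2 ^ p + 5 ^ p - 6 ^ p - 1 :: int)"
  proof -
    have f: "[int a ^ p = int a] (mod int p)" if "a \<in> {2, 5, 6}" for a
    proof -
      have "[a ^ (p - 1) = 1] (mod p)" by (rule fermat_theorem[OF pp small(1)[OF that]])
      then have "[a * a ^ (p - 1) = a * 1] (mod p)" by (intro cong_mult cong_refl)
      moreover have "a * a ^ (p - 1) = a ^ p" using p7 by (cases p) auto
      ultimately have "[a ^ p = a] (mod p)" by simp
      then show ?thesis by (metis cong_int_iff of_nat_power)
    qed
    have "[(2::int) ^ p + 5 ^ p - 6 ^ p - 1 = 2 + 5 - 6 - 1] (mod int p)"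
      using f[of 2] f[of 5] f[of 6] by (intro cong_diff cong_add cong_refl) auto
    then show ?thesis by (simp add: cong_0_iff)
  qed
  have F2: "int p dvd (int a ^ (p - 1) - 1)" if "a \<in> {2, 5, 6}" for a
  proof -
    have "[a ^ (p - 1) = 1] (mod p)" by (rule fermat_theorem[OF pp small(1)[OF that]])
    then have "[int a ^ (p - 1) = 1] (mod int p)" by (metis cong_int_iff of_nat_power of_nat_1)
    then show ?thesis by (simp add: cong_iff_dvd_diff)
  qed
  have F3: "[int (TN a) = int (TP a)] (mod int p)" if "a \<in> {2, 5, 6}" for a
  proof -
    have cop60: "coprime p 60"
    proof -
      have "\<not> p dvd 60"
      proof
        assume "p dvd 60"
        then have "p dvd 180" using dvd_trans[of p 60 180] by simp
        then have "int p dvd int 180" by (simp only: int_dvd_int_iff)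
        then show False using prime_not_dvd_180[OF pp p7] by simp
      qed
      then show ?thesis using prime_imp_coprime[OF pp] by blast
    qed
    have "[p ^ 4 = 1] (mod 60)" by (rule pow4[OF cop60])
    then have "[(p ^ 4) ^ m = 1 ^ m] (mod 60)" by (rule cong_pow)
    then have "[p * (p ^ 4) ^ m = p * 1] (mod 60)" by (intro cong_mult cong_refl) simp
    moreover have "p * (p ^ 4) ^ m = N" unfolding N_def E_def by (simp add: power_mult[symmetric])
    ultimately have c60: "[N = p] (mod 60)" by simp
    have "a dvd 60" using that by auto
    then have ca: "[N = p] (mod a)" using c60 cong_dvd_modulus_nat by blast
    have cp: "[N = p] (mod p)"
    proof -
      have "p dvd N" unfolding N_def E_def by simp
      then show ?thesis by (simp add: cong_def)
    qed
    have N0: "N > 0" unfolding N_def using pp prime_gt_0_nat by simp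
    have a0: "a > 0" using that by auto
    have nd': "\<not> (p - 1) dvd t"
    proof
      assume "(p - 1) dvd t"
      moreover have "odd p" using prime_odd_nat[OF pp] p7 by simp
      then have "even (p - 1)" using p7 by simp
      ultimately have "even t" using dvd_trans by blast
      then show False using todd by simp
    qed
    show ?thesis unfolding TN_def TP_def by (rule TT_cong[OF pp nd' small(2)[OF that] a0 N0 ca cp])
  qed
  have F4: "[2 * Rint p t + int (TP 2) + int (TP 5) - int (TP 6) = 0] (mod int p)"
    unfolding TP_def by (rule D_main[OF pp p7 todd])
  define Z where "Z = (int (TN 2) + int (TN 5) - int (TN 6)) - (int (TP 2) + int (TP 5) - int (TP 6))"
  define W where "W = 2 * Rint p t + int (TP 2) + int (TP 5) - int (TP 6)"
  have Zd: "int p dvd Z"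
  proof -
    have "[int (TN 2) + int (TN 5) - int (TN 6) = int (TP 2) + int (TP 5) - int (TP 6)] (mod int p)"
      using F3[of 2] F3[of 5] F3[of 6] by (intro cong_diff cong_add) auto
    then show ?thesis unfolding Z_def by (simp add: cong_iff_dvd_diff)
  qed
  have Wd: "int p dvd W" using F4 unfolding W_def by (simp add: cong_0_iff)
  define G where "G = of_int (2 ^ p + 5 ^ p - 6 ^ p - 1) * b - (u 2 * V 2 + u 5 * V 5 - u 6 * V 6)
      - (of_int (int 2 ^ (p - 1) - 1) * of_nat (TN 2) + of_int (int 5 ^ (p - 1) - 1) * of_nat (TN 5) - of_int (int 6 ^ (p - 1) - 1) * of_nat (TN 6))
      - of_int Z - of_int W"
  have Gp: "pdv p 1 G"
  proof -
    have h1: "pdv p 1 (of_int (2 ^ p + 5 ^ p - 6 ^ p - 1 :: int))" by (rule pdv_intI[OF pp]) (use F1 in simp)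
    have g1: "pdv p 1 (of_int (2 ^ p + 5 ^ p - 6 ^ p - 1) * b)" by (rule pdv_mult0[OF pp h1 bm])
    have g2: "pdv p 1 (u a * V a)" if "a \<in> {2, 5, 6}" for a
      using pdv_mult0'[OF pp u0[OF that] Vp[OF that]] .
    have g3: "pdv p 1 (of_int (int a ^ (p - 1) - 1) * of_nat (TN a))" if "a \<in> {2, 5, 6}" for a
    proof -
      have h3: "pdv p 1 (of_int (int a ^ (p - 1) - 1))" by (rule pdv_intI[OF pp]) (use F2[OF that] in simp)
      show ?thesis by (rule pdv_mult0[OF pp h3 pdv_nat[OF pp]])
    qed
    have g4: "pdv p 1 (of_int Z)" by (rule pdv_intI[OF pp]) (use Zd in simp)
    have g5: "pdv p 1 (of_int W)" by (rule pdv_intI[OF pp]) (use Wd in simp)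
    show ?thesis unfolding G_def
      by (intro pdv_diff[OF pp] pdv_add[OF pp] g1 g2 g3 g4 g5) auto
  qed
  have main: "C_coef p k 2 5 6 * bernoulli (2 * k) - of_int (Rint p t) = G / of_int 2"
  proof -
    have I2: "(u 2 - 1) * b = (2 ^ p - 1) * b - u 2 * V 2 - 2 ^ (p - 1) * of_nat (TN 2)" using Ia[of 2] by simp
    have I5: "(u 5 - 1) * b = (5 ^ p - 1) * b - u 5 * V 5 - 5 ^ (p - 1) * of_nat (TN 5)" using Ia[of 5] by simp
    have I6: "(u 6 - 1) * b = (6 ^ p - 1) * b - u 6 * V 6 - 6 ^ (p - 1) * of_nat (TN 6)" using Ia[of 6] by simp
    have "2 * (C_coef p k 2 5 6 * bernoulli (2 * k) - of_int (Rint p t)) = (u 2 - 1) * b + (u 5 - 1) * b - (u 6 - 1) * b - 2 * of_int (Rint p t)"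
      unfolding L by simp
    also have "\<dots> = G" unfolding I2 I5 I6 G_def Z_def W_def by (simp add: algebra_simps)
    finally show ?thesis by simp
  qed
  have "pdv p 1 (C_coef p k 2 5 6 * bernoulli (2 * k) - of_int (Rint p t))"
    unfolding main by (rule pdv_div_int[OF pp Gp]) (use p7 in \<open>auto dest: zdvd_imp_le\<close>)
  then show ?thesis unfolding R by (rule pdv_rat_cong[OF pp])
qed


end
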